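(* Assume the setting and assumptions (A1)–(A5) described in the context, so that the closure of $A$ generates a conservative Markov semigroup $\{T(t)\}_{t\ge0}$ in $C(\bar L)$, and assume additionally that $\iota_n(M_n)$ converges weakly to a probability measure $P$ on $\bar L$. Let $X(t)$ be the Markov process in $\bar L$ with transition semigroup $\{T(t)\}$ and initial distribution $P$ (which is stationary), and for each $n$ let $(\lambda_n(k))_{k=0,1,2,\dots}$ be the stationary Markov chain on $L_n$ with transition matrix $T_n$ and initial distribution $M_n$. Then the finite-dimensional distributions of the chains converge to those of $X$ under the time scaling in which one step corresponds to time $\varepsilon_n$: for any $0\le t_1<\dots<t_k$ and $f_1,\dots,f_k\in C(\bar L)$, $$\lim_{n\to\infty}\mathbb E\Big[\prod_{i=1}^k f_i\big(\iota_n(\lambda_n([\varepsilon_n^{-1}t_i]))\big)\Big]=\mathbb E\Big[\prod_{i=1}^kf_i(X(t_i))\Big].$$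
   Context: $L=\bigsqcup_{n\ge0}L_n$ is a graded set with $L_0$ a singleton and each $L_n$ finite; $p^\downarrow:L\times L\to[0,\infty)$ vanishes unless $|\lambda|=|\mu|+1$ and $\sum_{\mu\in L_{|\lambda|-1}}p^\downarrow(\lambda,\mu)=1$ for $|\lambda|\ge1$. $\{M_n\}$ is a coherent system (probability measures on $L_n$ with $\sum_{\lambda\in L_n}M_n(\lambda)p^\downarrow(\lambda,\mu)=M_{n-1}(\mu)$) with $M_n(\lambda)>0$ everywhere; $p^\uparrow(\lambda,\nu)=\frac{M_{n+1}(\nu)}{M_n(\lambda)}p^\downarrow(\nu,\lambda)$; $T_n(\lambda,\tilde\lambda)=\sum_{\nu\in L_{n+1}}p^\uparrow(\lambda,\nu)p^\downarrow(\nu,\tilde\lambda)$, acting on real functions on $L_n$ (norm $\|g\|_n=\sup|g|$) by $(T_ng)(\lambda)=\sum_{\tilde\lambda}T_n(\lambda,\tilde\lambda)g(\tilde\lambda)$. $\bar L$ is a topological space, $\iota_n:L_n\to\bar L$ injective, $\pi_n:C(\bar L)\to C(L_n)$, $(\pi_nf)(\lambda)=f(\iota_n(\lambda))$. Assumptions: (A1) $\bar L$ compact metrizable separable; (A2) every nonempty open set meets $\iota_n(L_n)$ for all large $n$; (A3) there is a dense subspace $\mathcal F\subset C(\bar L)$ with an exhaustive ascending sequence of finite-dimensional subspaces $\mathcal F^m$ such that for each $m$ and all large $n$, $\pi_n$ is injective on $\mathcal F^m$ and $\pi_n(\mathcal F^m)$ is $T_n$-invariant; (A4) there are $\varepsilon_n>0$,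 $\varepsilon_n\to0$, such that for $f\in\mathcal F^m$ the elements $g_n\in\mathcal F^m$ with $\pi_n(g_n)=\varepsilon_n^{-1}(T_n-\mathbf 1)\pi_n f$ converge in $\mathcal F^m$ to a limit $Af$; (A5) $1\in\mathcal F$. *)

theory Defs
  imports "HOL-Probability.Probability"
begin

text \<open>The graded set L is modelled by a type 'l together with a degree map
  deg; the level L_n is the set of elements of degree n.\<close>

definition level :: "('l \<Rightarrow> nat) \<Rightarrow> nat \<Rightarrow> 'l set" where
  "level deg n = {lam. deg lam = n}"

text \<open>Standing assumptions on L, the down transition function pd and the
  coherent system M (M n is the probability measure on L_n, given by its weights).\<close>

definition coherent_setting ::
  "('l \<Rightarrow> nat) \<Rightarrow> ('l \<Rightarrow> 'l \<Rightarrow> real) \<Rightarrow> (nat \<Rightarrow> 'l \<Rightarrow> real) \<Rightarrow> bool" where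
  "coherent_setting deg pd M \<longleftrightarrow>
     card (level deg 0) = 1 \<and>
     (\<forall>n. finite (level deg n)) \<and>
     (\<forall>lam mu. pd lam mu \<ge> 0) \<and>
     (\<forall>lam mu. deg lam \<noteq> deg mu + 1 \<longrightarrow> pd lam mu = 0) \<and>
     (\<forall>lam. deg lam \<ge> 1 \<longrightarrow> (\<Sum>mu\<in>level deg (deg lam - 1). pd lam mu) = 1) \<and>
     (\<forall>n. \<forall>lam\<in>level deg n. M n lam > 0) \<and>
     (\<forall>n. (\<Sum>lam\<in>level deg n. M n lam) = 1) \<and>
     (\<forall>n\<ge>1. \<forall>mu\<in>level deg (n - 1).
        (\<Sum>lam\<in>level deg n. M n lam * pd lam mu) = M (n - 1) mu)"

definition pup ::
  "('l \<Rightarrow> nat) \<Rightarrow> ('l \<Rightarrow> 'l \<Rightarrow> real) \<Rightarrow> (nat \<Rightarrow> 'l \<Rightarrow> real) \<Rightarrow> 'l \<Rightarrow> 'l \<Rightarrow> real" where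
  "pup deg pd M lam nu = M (Suc (deg lam)) nu / M (deg lam) lam * pd nu lam"

definition Tmat ::
  "('l \<Rightarrow> nat) \<Rightarrow> ('l \<Rightarrow> 'l \<Rightarrow> real) \<Rightarrow> (nat \<Rightarrow> 'l \<Rightarrow> real) \<Rightarrow> nat \<Rightarrow> 'l \<Rightarrow> 'l \<Rightarrow> real" where
  "Tmat deg pd M n lam lam' = (\<Sum>nu\<in>level deg (Suc n). pup deg pd M lam nu * pd nu lam')"

definition Tapp ::
  "('l \<Rightarrow> nat) \<Rightarrow> ('l \<Rightarrow> 'l \<Rightarrow> real) \<Rightarrow> (nat \<Rightarrow> 'l \<Rightarrow> real) \<Rightarrow> nat \<Rightarrow> ('l \<Rightarrow> real) \<Rightarrow> 'l \<Rightarrow> real" where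
  "Tapp deg pd M n g lam = (\<Sum>lam'\<in>level deg n. Tmat deg pd M n lam lam' * g lam')"

definition generator_graph ::
  "(real \<Rightarrow> ('x::topological_space \<Rightarrow>\<^sub>C real) \<Rightarrow> ('x \<Rightarrow>\<^sub>C real)) \<Rightarrow> (('x \<Rightarrow>\<^sub>C real) \<times> ('x \<Rightarrow>\<^sub>C real)) set" where
  "generator_graph T = {(f, g). ((\<lambda>h. (1 / h) *\<^sub>R (T h f - f)) \<longlongrightarrow> g) (at_right 0)}"

definition markov_semigroup ::
  "(real \<Rightarrow> ('x::topological_space \<Rightarrow>\<^sub>C real) \<Rightarrow> ('x \<Rightarrow>\<^sub>C real)) \<Rightarrow> bool" where
  "markov_semigroup T \<longleftrightarrow>
     (\<forall>t\<ge>0. bounded_linear (T t)) \<and>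
     (\<forall>f. T 0 f = f) \<and>
     (\<forall>s\<ge>0. \<forall>t\<ge>0. \<forall>f. T (s + t) f = T s (T t f)) \<and>
     (\<forall>f. continuous_on {0..} (\<lambda>t. T t f)) \<and>
     (\<forall>t\<ge>0. T t (const_bcontfun 1) = const_bcontfun 1) \<and>
     (\<forall>t\<ge>0. \<forall>f. (\<forall>x. apply_bcontfun f x \<ge> 0) \<longrightarrow> (\<forall>x. apply_bcontfun (T t f) x \<ge> 0))"

definition nat_filtration :: "'w measure \<Rightarrow> (real \<Rightarrow> 'w \<Rightarrow> 'x::topological_space) \<Rightarrow> real \<Rightarrow> 'w measure" where
  "nat_filtration Om X s =
     sigma (space Om) (\<Union>u\<in>{0..s}. {X u -` B \<inter> space Om | B. B \<in> sets borel})"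

definition markov_process ::
  "'w measure \<Rightarrow> (real \<Rightarrow> 'w \<Rightarrow> 'x::topological_space) \<Rightarrow>
   (real \<Rightarrow> ('x \<Rightarrow>\<^sub>C real) \<Rightarrow> ('x \<Rightarrow>\<^sub>C real)) \<Rightarrow> 'x measure \<Rightarrow> bool" where
  "markov_process Om X T P \<longleftrightarrow>
     prob_space Om \<and>
     (\<forall>t\<ge>0. X t \<in> measurable Om borel) \<and>
     distr Om borel (X 0) = P \<and>
     (\<forall>s\<ge>0. \<forall>t\<ge>0. \<forall>f.
        AE w in Om. real_cond_exp Om (nat_filtration Om X s) (\<lambda>w. apply_bcontfun f (X (s + t) w)) w
                    = apply_bcontfun (T t f) (X s w))"

definition markov_chain ::
  "'v measure \<Rightarrow> (nat \<Rightarrow> 'v \<Rightarrow> 'l) \<Rightarrow> 'l set \<Rightarrow> ('l \<Rightarrow> real) \<Rightarrow> ('l \<Rightarrow> 'l \<Rightarrow> real) \<Rightarrow> bool" where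
  "markov_chain Om Y S mu0 Q \<longleftrightarrow>
     prob_space Om \<and>
     (\<forall>k. Y k \<in> measurable Om (count_space UNIV)) \<and>
     (\<forall>k. \<forall>w\<in>space Om. Y k w \<in> S) \<and>
     (\<forall>k. \<forall>x::nat \<Rightarrow> 'l. (\<forall>i\<le>k. x i \<in> S) \<longrightarrow>
        measure Om {w\<in>space Om. \<forall>i\<le>k. Y i w = x i}
          = mu0 (x 0) * (\<Prod>i<k. Q (x i) (x (Suc i))))"

end

theory Submission
  imports Defs
begin


lemma fd_bound:
  fixes B :: "'a::real_normed_vector set"
  assumes "finite B" "independent B"
  shows "\<exists>\<delta>>0. \<forall>c. \<delta> * (\<Sum>b\<in>B. \<bar>c b\<bar>) \<le> norm (\<Sum>b\<in>B. c b *\<^sub>R b)"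
  using assms
proof (induction rule: finite_induct)
  case empty
  then show ?case by (intro exI[of _ 1]) auto
next
  case (insert b0 B')
  from insert.prems insert.hyps have indB': "independent B'" and nsp: "b0 \<notin> span B'"
    by (auto simp: independent_insert)
  from insert.IH[OF indB'] obtain d where d: "d > 0"
    "\<And>c. d * (\<Sum>b\<in>B'. \<bar>c b\<bar>) \<le> norm (\<Sum>b\<in>B'. c b *\<^sub>R b)" by blast
  have "\<exists>\<eta>>0. \<forall>c. \<eta> \<le> norm (b0 - (\<Sum>b\<in>B'. c b *\<^sub>R b))"
  proof (rule ccontr)
    assume "\<not> ?thesis"
    then have "\<forall>k::nat. \<exists>c. norm (b0 - (\<Sum>b\<in>B'. c b *\<^sub>R b)) < 1 / Suc k"
      by (metis not_le of_nat_0_less_iff zero_less_Suc zero_less_divide_1_iff)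
    then obtain C where C: "\<And>k. norm (b0 - (\<Sum>b\<in>B'. C k b *\<^sub>R b)) < 1 / Suc k"
      by metis
    define v where "v k = (\<Sum>b\<in>B'. C k b *\<^sub>R b)" for k
    have vlim: "v \<longlonglongrightarrow> b0"
    proof (rule LIMSEQ_I)
      fix r :: real assume "r > 0"
      then obtain N :: nat where N: "1 / Suc N < r"
        by (metis nat_approx_posE)
      show "\<exists>no. \<forall>n\<ge>no. norm (v n - b0) < r"
      proof (intro exI allI impI)
        fix n assume "N \<le> n"
        then have "1 / real (Suc n) \<le> 1 / Suc N" by (intro divide_left_mono) auto
        moreover have "norm (v n - b0) = norm (b0 - v n)" by (rule norm_minus_commute)
        ultimately show "norm (v n - b0) < r" using C[of n] N unfolding v_def by linarith
      qed
    qed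
    then have cv: "Cauchy v" using LIMSEQ_imp_Cauchy by blast
    have cc: "Cauchy (\<lambda>k. C k b)" if "b \<in> B'" for b
      unfolding Cauchy_def
    proof (intro allI impI)
      fix e :: real assume "e > 0"
      then obtain N where N: "\<And>m n. m \<ge> N \<Longrightarrow> n \<ge> N \<Longrightarrow> dist (v m) (v n) < d * e"
        using cv d(1) unfolding Cauchy_def by (meson mult_pos_pos)
      show "\<exists>M. \<forall>m\<ge>M. \<forall>n\<ge>M. dist (C m b) (C n b) < e"
      proof (intro exI allI impI)
        fix m n assume mn: "m \<ge> N" "n \<ge> N"
        have "d * (\<Sum>b\<in>B'. \<bar>C m b - C n b\<bar>) \<le> norm (\<Sum>b\<in>B'. (C m b - C n b) *\<^sub>R b)"
          by (rule d(2))
        also have "(\<Sum>b\<in>B'. (C m b - C n b) *\<^sub>R b) = v m - v n"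
          unfolding v_def by (simp add: scaleR_diff_left sum_subtractf)
        also have "norm (v m - v n) < d * e" using N[OF mn] by (simp add: dist_norm)
        finally have "(\<Sum>b\<in>B'. \<bar>C m b - C n b\<bar>) < e" using d(1) by simp
        moreover have "\<bar>C m b - C n b\<bar> \<le> (\<Sum>b\<in>B'. \<bar>C m b - C n b\<bar>)"
          using that insert.hyps(1) by (intro member_le_sum) auto
        ultimately show "dist (C m b) (C n b) < e" by (simp add: dist_real_def)
      qed
    qed
    define c where "c b = lim (\<lambda>k. C k b)" for b
    have "(\<lambda>k. C k b) \<longlonglongrightarrow> c b" if "b \<in> B'" for b
      using cc[OF that] unfolding c_def by (simp add: Cauchy_convergent_iff convergent_LIMSEQ_iff)
    then have "v \<longlonglongrightarrow> (\<Sum>b\<in>B'. c b *\<^sub>R b)"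
      unfolding v_def by (intro tendsto_sum tendsto_scaleR tendsto_const) auto
    with vlim have "b0 = (\<Sum>b\<in>B'. c b *\<^sub>R b)" using LIMSEQ_unique by blast
    then have "b0 \<in> span B'" using span_finite[OF insert.hyps(1)] by auto
    with nsp show False by blast
  qed
  then obtain \<eta> where eta: "\<eta> > 0" "\<And>c. \<eta> \<le> norm (b0 - (\<Sum>b\<in>B'. c b *\<^sub>R b))" by blast
  define K where "K = 1 / \<eta> + (1 + norm b0 / \<eta>) / d"
  have Kpos: "K > 0"
  proof -
    have "0 < 1 / \<eta>" using eta by simp
    moreover have "0 < (1 + norm b0 / \<eta>) / d" using eta d by (simp add: add_pos_nonneg)
    ultimately show ?thesis unfolding K_def by (metis add_pos_pos)
  qed
  show ?case
  proof (intro exI[of _ "1 / K"] conjI allI)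
    show "1 / K > 0" using Kpos by simp
    fix c :: "'a \<Rightarrow> real"
    define h where "h = (\<Sum>b\<in>insert b0 B'. c b *\<^sub>R b)"
    define v where "v = (\<Sum>b\<in>B'. c b *\<^sub>R b)"
    have hv: "h = c b0 *\<^sub>R b0 + v" unfolding h_def v_def using insert.hyps by simp
    have h1: "\<bar>c b0\<bar> * \<eta> \<le> norm h"
    proof (cases "c b0 = 0")
      case True then show ?thesis by simp
    next
      case False
      have "h = c b0 *\<^sub>R (b0 - (\<Sum>b\<in>B'. (- c b / c b0) *\<^sub>R b))"
        using False unfolding hv v_def
        by (simp add: scaleR_diff_right scaleR_sum_right divide_inverse sum_negf[symmetric] mult.left_commute[of "c b0"])
      then have "norm h = \<bar>c b0\<bar> * norm (b0 - (\<Sum>b\<in>B'. (- c b / c b0) *\<^sub>R b))" by simp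
      then show ?thesis using eta(2)[of "\<lambda>b. - c b / c b0"] by (simp add: mult_left_mono)
    qed
    have h2: "norm v \<le> norm h + \<bar>c b0\<bar> * norm b0"
    proof -
      have "v = h - c b0 *\<^sub>R b0" using hv by simp
      then have "norm v \<le> norm h + norm (c b0 *\<^sub>R b0)" using norm_triangle_ineq4 by metis
      then show ?thesis by simp
    qed
    have cb0: "\<bar>c b0\<bar> \<le> norm h / \<eta>" using h1 eta(1) by (simp add: field_simps)
    have sB': "(\<Sum>b\<in>B'. \<bar>c b\<bar>) \<le> norm v / d" using d(1) d(2)[of c] unfolding v_def
      by (simp add: field_simps)
    have "norm v \<le> norm h * (1 + norm b0 / \<eta>)"
    proof -
      have "\<bar>c b0\<bar> * norm b0 \<le> norm h / \<eta> * norm b0" using cb0 by (rule mult_right_mono) simp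
      then show ?thesis using h2 by (simp add: algebra_simps)
    qed
    then have sB'2: "(\<Sum>b\<in>B'. \<bar>c b\<bar>) \<le> norm h * (1 + norm b0 / \<eta>) / d"
      using sB' d(1) by (meson divide_right_mono less_imp_le order_trans)
    have "(\<Sum>b\<in>insert b0 B'. \<bar>c b\<bar>) = \<bar>c b0\<bar> + (\<Sum>b\<in>B'. \<bar>c b\<bar>)" using insert.hyps by simp
    also have "\<dots> \<le> norm h / \<eta> + norm h * (1 + norm b0 / \<eta>) / d" using cb0 sB'2 by linarith
    also have "\<dots> = norm h * K" unfolding K_def by (simp add: algebra_simps)
    finally show "1 / K * (\<Sum>b\<in>insert b0 B'. \<bar>c b\<bar>) \<le> norm h"
      using Kpos by (simp add: field_simps)
  qed
qed




definition pathw :: "('l \<Rightarrow> real) \<Rightarrow> ('l \<Rightarrow> 'l \<Rightarrow> real) \<Rightarrow> nat \<Rightarrow> (nat \<Rightarrow> 'l) \<Rightarrow> real" where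
  "pathw muz Q K x = muz (x 0) * (\<Prod>i<K. Q (x i) (x (Suc i)))"

lemma one_step_sum:
  fixes G :: "(nat \<Rightarrow> 'l) \<Rightarrow> real"
  assumes S: "finite S"
    and dep: "\<And>x y. (\<And>i. i \<le> K \<Longrightarrow> x i = y i) \<Longrightarrow> G x = G y"
  shows "(\<Sum>x\<in>PiE {..Suc K} (\<lambda>_. S). G x * h (x (Suc K)) * pathw muz Q (Suc K) x)
       = (\<Sum>x\<in>PiE {..K} (\<lambda>_. S). G x * (\<Sum>y\<in>S. Q (x K) y * h y) * pathw muz Q K x)"
proof -
  have ins: "{..Suc K} = insert (Suc K) {..K}" by auto
  have nin: "Suc K \<notin> {..K}" by simp
  have inj: "inj_on (\<lambda>(y, g). g(Suc K := y)) (S \<times> PiE {..K} (\<lambda>_. S))"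
  proof (rule inj_onI, clarify)
    fix y g y' g'
    assume g: "g \<in> PiE {..K} (\<lambda>_. S)" and g': "g' \<in> PiE {..K} (\<lambda>_. S)"
      and eq: "g(Suc K := y) = g'(Suc K := y')"
    from eq have "y = y'" by (metis fun_upd_same)
    moreover have "g = g'"
    proof
      fix i show "g i = g' i"
      proof (cases "i = Suc K")
        case True
        then show ?thesis using g g' nin by (simp add: PiE_def extensional_def)
      next
        case False
        then show ?thesis using fun_cong[OF eq, of i] by simp
      qed
    qed
    ultimately show "y = y' \<and> g = g'" by simp
  qed
  have "(\<Sum>x\<in>PiE {..Suc K} (\<lambda>_. S). G x * h (x (Suc K)) * pathw muz Q (Suc K) x)
      = (\<Sum>p\<in>S \<times> PiE {..K} (\<lambda>_. S). (\<lambda>x. G x * h (x (Suc K)) * pathw muz Q (Suc K) x) ((\<lambda>(y, g). g(Suc K := y)) p))"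
    unfolding ins PiE_insert_eq using inj by (rule sum.reindex[unfolded comp_def])
  also have "\<dots> = (\<Sum>g\<in>PiE {..K} (\<lambda>_. S). \<Sum>y\<in>S. G g * h y * (pathw muz Q K g * Q (g K) y))"
  proof -
    have eq: "G (g(Suc K := y)) * h y * pathw muz Q (Suc K) (g(Suc K := y))
        = G g * h y * (pathw muz Q K g * Q (g K) y)" for y g
    proof -
      have "G (g(Suc K := y)) = G g" by (rule dep) auto
      moreover have "(\<Prod>i<K. Q ((g(Suc K := y)) i) ((g(Suc K := y)) (Suc i))) = (\<Prod>i<K. Q (g i) (g (Suc i)))"
        by (rule prod.cong) auto
      ultimately show ?thesis unfolding pathw_def by (simp add: mult_ac)
    qed
    have "(\<Sum>p\<in>S \<times> PiE {..K} (\<lambda>_. S). (\<lambda>x. G x * h (x (Suc K)) * pathw muz Q (Suc K) x) ((\<lambda>(y, g). g(Suc K := y)) p))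
       = (\<Sum>p\<in>S \<times> PiE {..K} (\<lambda>_. S). (\<lambda>(y,g). G g * h y * (pathw muz Q K g * Q (g K) y)) p)"
      by (rule sum.cong) (auto simp: eq)
    also have "\<dots> = (\<Sum>y\<in>S. \<Sum>g\<in>PiE {..K} (\<lambda>_. S). G g * h y * (pathw muz Q K g * Q (g K) y))"
      by (rule sum.cartesian_product[symmetric])
    also have "\<dots> = (\<Sum>g\<in>PiE {..K} (\<lambda>_. S). \<Sum>y\<in>S. G g * h y * (pathw muz Q K g * Q (g K) y))"
      by (rule sum.swap)
    finally show ?thesis .
  qed
  also have "\<dots> = (\<Sum>x\<in>PiE {..K} (\<lambda>_. S). G x * (\<Sum>y\<in>S. Q (x K) y * h y) * pathw muz Q K x)"
    by (rule sum.cong) (auto simp: sum_distrib_left sum_distrib_right mult_ac)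
  finally show ?thesis .
qed




definition stepop :: "'l set \<Rightarrow> ('l \<Rightarrow> 'l \<Rightarrow> real) \<Rightarrow> ('l \<Rightarrow> real) \<Rightarrow> 'l \<Rightarrow> real" where
  "stepop S Q g = (\<lambda>l. \<Sum>y\<in>S. Q l y * g y)"

lemma multi_step_sum:
  fixes G :: "(nat \<Rightarrow> 'l) \<Rightarrow> real"
  assumes S: "finite S"
    and dep: "\<And>x y. (\<And>i. i \<le> a \<Longrightarrow> x i = y i) \<Longrightarrow> G x = G y"
  shows "(\<Sum>x\<in>PiE {..a+d} (\<lambda>_. S). G x * h (x (a+d)) * pathw muz Q (a+d) x)
       = (\<Sum>x\<in>PiE {..a} (\<lambda>_. S). G x * (stepop S Q ^^ d) h (x a) * pathw muz Q a x)"
proof (induction d arbitrary: h)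
  case 0
  show ?case by (simp only: add_0_right funpow_0)
next
  case (Suc d)
  have dep': "G x = G y" if "\<And>i. i \<le> a + d \<Longrightarrow> x i = y i" for x y
    using that by (intro dep) simp
  have "(\<Sum>x\<in>PiE {..a + Suc d} (\<lambda>_. S). G x * h (x (a + Suc d)) * pathw muz Q (a + Suc d) x)
      = (\<Sum>x\<in>PiE {..a+d} (\<lambda>_. S). G x * (\<Sum>y\<in>S. Q (x (a+d)) y * h y) * pathw muz Q (a+d) x)"
    using one_step_sum[OF S dep', where h=h and muz=muz and Q=Q] by simp
  also have "\<dots> = (\<Sum>x\<in>PiE {..a+d} (\<lambda>_. S). G x * stepop S Q h (x (a+d)) * pathw muz Q (a+d) x)"
    by (simp add: stepop_def)
  also have "\<dots> = (\<Sum>x\<in>PiE {..a} (\<lambda>_. S). G x * (stepop S Q ^^ d) (stepop S Q h) (x a) * pathw muz Q a x)"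
    by (rule Suc.IH)
  also have "\<dots> = (\<Sum>x\<in>PiE {..a} (\<lambda>_. S). G x * (stepop S Q ^^ Suc d) h (x a) * pathw muz Q a x)"
    by (simp add: funpow_Suc_right del: funpow.simps)
  finally show ?case .
qed

lemma path_formula:
  fixes G :: "(nat \<Rightarrow> 'l) \<Rightarrow> real"
  assumes mc: "markov_chain Om Y S muz Q" and S: "finite S"
    and dep: "\<And>x y. (\<And>i. i \<le> K \<Longrightarrow> x i = y i) \<Longrightarrow> G x = G y"
  shows "(\<integral>w. G (\<lambda>i. Y i w) \<partial>Om) = (\<Sum>x\<in>PiE {..K} (\<lambda>_. S). G x * pathw muz Q K x)"
proof -
  have ps: "prob_space Om" and meas: "\<And>k. Y k \<in> measurable Om (count_space UNIV)"
    and inS: "\<And>k w. w \<in> space Om \<Longrightarrow> Y k w \<in> S"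
    and pr: "\<And>k x. (\<forall>i\<le>k. x i \<in> S) \<Longrightarrow>
        measure Om {w\<in>space Om. \<forall>i\<le>k. Y i w = x i} = muz (x 0) * (\<Prod>i<k. Q (x i) (x (Suc i)))"
    using mc unfolding markov_chain_def by auto
  interpret prob_space Om by (rule ps)
  define E where "E x = {w\<in>space Om. \<forall>i\<le>K. Y i w = x i}" for x :: "nat \<Rightarrow> 'l"
  have Emeas: "E x \<in> sets Om" for x
  proof -
    have "E x = (\<Inter>i\<in>{..K}. Y i -` {x i} \<inter> space Om)" unfolding E_def by auto
    also have "\<dots> \<in> sets Om"
      using meas by (intro sets.finite_INT) (auto simp: measurable_def)
    finally show ?thesis .
  qed
  let ?P = "PiE {..K} (\<lambda>_. S)"
  have finP: "finite ?P" using S by (simp add: finite_PiE)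
  have pt: "G (\<lambda>i. Y i w) = (\<Sum>x\<in>?P. G x * indicator (E x) w)" if w: "w \<in> space Om" for w
  proof -
    define x0 where "x0 = restrict (\<lambda>i. Y i w) {..K}"
    have x0P: "x0 \<in> ?P" unfolding x0_def using inS[OF w] by auto
    have "(\<Sum>x\<in>?P. G x * indicator (E x) w) = (\<Sum>x\<in>?P. if x = x0 then G x else 0)"
    proof (rule sum.cong)
      fix x assume xP: "x \<in> ?P"
      have "w \<in> E x \<longleftrightarrow> x = x0"
      proof
        assume "w \<in> E x"
        then have "\<forall>i\<le>K. Y i w = x i" unfolding E_def by auto
        then show "x = x0" using xP unfolding x0_def
          by (intro ext) (auto simp: PiE_def extensional_def)
      next
        assume "x = x0" then show "w \<in> E x" using w unfolding E_def x0_def by auto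
      qed
      then show "G x * indicator (E x) w = (if x = x0 then G x else 0)" by auto
    qed simp
    also have "\<dots> = G x0" using x0P finP by simp
    also have "G x0 = G (\<lambda>i. Y i w)" by (rule dep) (simp add: x0_def)
    finally show ?thesis by simp
  qed
  have "(\<integral>w. G (\<lambda>i. Y i w) \<partial>Om) = (\<integral>w. (\<Sum>x\<in>?P. G x * indicator (E x) w) \<partial>Om)"
    by (rule Bochner_Integration.integral_cong) (auto simp: pt)
  also have "\<dots> = (\<Sum>x\<in>?P. \<integral>w. G x * indicator (E x) w \<partial>Om)"
  proof (rule Bochner_Integration.integral_sum)
    fix x
    have "integrable Om (indicat_real (E x))"
      using Emeas[of x] by (simp add: integrable_indicator_iff sets.Int_space_eq2 less_top[symmetric])
    then show "integrable Om (\<lambda>w. G x * indicator (E x) w)" by (rule integrable_mult_right)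
  qed
  also have "\<dots> = (\<Sum>x\<in>?P. G x * measure Om (E x))"
    using Emeas by (simp add: sets.Int_space_eq2)
  also have "\<dots> = (\<Sum>x\<in>?P. G x * pathw muz Q K x)"
  proof (rule sum.cong)
    fix x assume x: "x \<in> ?P"
    then have "\<forall>i\<le>K. x i \<in> S" by auto
    then have "measure Om (E x) = pathw muz Q K x" unfolding E_def pathw_def by (rule pr)
    then show "G x * measure Om (E x) = G x * pathw muz Q K x" by simp
  qed simp
  finally show ?thesis .
qed

lemma chain_merge:
  fixes G :: "(nat \<Rightarrow> 'l) \<Rightarrow> real"
  assumes mc: "markov_chain Om Y S muz Q" and S: "finite S" and ab: "a \<le> b"
    and dep: "\<And>x y. (\<And>i. i \<le> a \<Longrightarrow> x i = y i) \<Longrightarrow> G x = G y"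
  shows "(\<integral>w. G (\<lambda>i. Y i w) * h (Y b w) \<partial>Om)
       = (\<integral>w. G (\<lambda>i. Y i w) * (stepop S Q ^^ (b - a)) h (Y a w) \<partial>Om)"
proof -
  have b: "b = a + (b - a)" using ab by simp
  have depb: "G x * h (x b) = G y * h (y b)" if xy: "\<And>i. i \<le> b \<Longrightarrow> x i = y i" for x y
  proof -
    have "G x = G y" using ab xy by (intro dep) auto
    moreover have "x b = y b" using xy by simp
    ultimately show ?thesis by simp
  qed
  have depa: "G x * (stepop S Q ^^ (b-a)) h (x a) = G y * (stepop S Q ^^ (b-a)) h (y a)"
    if xy: "\<And>i. i \<le> a \<Longrightarrow> x i = y i" for x y
  proof -
    have "G x = G y" using xy by (intro dep) auto
    moreover have "x a = y a" using xy by simp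
    ultimately show ?thesis by simp
  qed
  have "(\<integral>w. G (\<lambda>i. Y i w) * h (Y b w) \<partial>Om)
      = (\<Sum>x\<in>PiE {..b} (\<lambda>_. S). G x * h (x b) * pathw muz Q b x)"
    by (rule path_formula[OF mc S depb])
  also have "\<dots> = (\<Sum>x\<in>PiE {..a + (b - a)} (\<lambda>_. S). G x * h (x (a + (b-a))) * pathw muz Q (a + (b-a)) x)"
    using b by simp
  also have "\<dots> = (\<Sum>x\<in>PiE {..a} (\<lambda>_. S). G x * (stepop S Q ^^ (b-a)) h (x a) * pathw muz Q a x)"
    by (rule multi_step_sum[OF S dep])
  also have "\<dots> = (\<integral>w. G (\<lambda>i. Y i w) * (stepop S Q ^^ (b - a)) h (Y a w) \<partial>Om)"
    by (rule path_formula[OF mc S depa, symmetric])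
  finally show ?thesis .
qed

lemma chain_base:
  assumes mc: "markov_chain Om Y S muz Q" and S: "finite S"
  shows "(\<integral>w. h (Y b w) \<partial>Om) = (\<Sum>l\<in>S. muz l * (stepop S Q ^^ b) h l)"
proof -
  have "(\<integral>w. h (Y b w) \<partial>Om) = (\<integral>w. (\<lambda>x. 1) (\<lambda>i. Y i w) * h (Y b w) \<partial>Om)" by simp
  also have "\<dots> = (\<integral>w. (\<lambda>x. 1) (\<lambda>i. Y i w) * (stepop S Q ^^ (b - 0)) h (Y 0 w) \<partial>Om)"
    by (rule chain_merge[OF mc S]) auto
  also have "\<dots> = (\<integral>w. (\<lambda>x. (stepop S Q ^^ b) h (x 0)) (\<lambda>i. Y i w) \<partial>Om)" by simp
  also have "\<dots> = (\<Sum>x\<in>PiE {..0} (\<lambda>_. S). (stepop S Q ^^ b) h (x 0) * pathw muz Q 0 x)"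
    by (rule path_formula[OF mc S]) simp
  also have "\<dots> = (\<Sum>l\<in>S. muz l * (stepop S Q ^^ b) h l)"
  proof (rule sum.reindex_bij_witness[of _ "\<lambda>l. \<lambda>i\<in>{..0}. l" "\<lambda>x. x 0"])
    fix x assume "x \<in> PiE {..0::nat} (\<lambda>_. S)"
    then show "(\<lambda>i\<in>{..0}. x 0) = x" by (intro ext) (auto simp: PiE_def extensional_def)
  qed (auto simp: pathw_def)
  finally show ?thesis .
qed




lemma bsum_apply:
  fixes c :: "'b \<Rightarrow> real" and g :: "'b \<Rightarrow> ('x::topological_space \<Rightarrow>\<^sub>C real)"
  shows "apply_bcontfun (\<Sum>b\<in>B. c b *\<^sub>R g b) x = (\<Sum>b\<in>B. c b * apply_bcontfun (g b) x)"
proof (induction B rule: infinite_finite_induct)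
  case (infinite A) then show ?case by simp
next
  case empty then show ?case by simp
next
  case (insert b B) then show ?case by simp
qed

locale tkl =
  fixes deg :: "'l \<Rightarrow> nat"
    and pd :: "'l \<Rightarrow> 'l \<Rightarrow> real"
    and M :: "nat \<Rightarrow> 'l \<Rightarrow> real"
    and \<iota> :: "nat \<Rightarrow> 'l \<Rightarrow> 'x::metric_space"
    and F :: "('x \<Rightarrow>\<^sub>C real) set"
    and Fm :: "nat \<Rightarrow> ('x \<Rightarrow>\<^sub>C real) set"
    and \<epsilon> :: "nat \<Rightarrow> real"
    and A :: "('x \<Rightarrow>\<^sub>C real) \<Rightarrow> ('x \<Rightarrow>\<^sub>C real)"
    and T :: "real \<Rightarrow> ('x \<Rightarrow>\<^sub>C real) \<Rightarrow> ('x \<Rightarrow>\<^sub>C real)"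
  assumes setting: "coherent_setting deg pd M"
    and F_dense: "closure F = UNIV"
    and Fm_subspace: "\<And>m. subspace (Fm m)"
    and Fm_findim: "\<And>m. \<exists>B. finite B \<and> span B = Fm m"
    and Fm_exhaust: "(\<Union>m. Fm m) = F"
    and eps_pos: "\<And>n. \<epsilon> n > 0"
    and eps_lim: "\<epsilon> \<longlonglongrightarrow> 0"
    and A4: "\<And>m f. f \<in> Fm m \<Longrightarrow> \<exists>g :: nat \<Rightarrow> ('x \<Rightarrow>\<^sub>C real).
               eventually (\<lambda>n. g n \<in> Fm m \<and>
                 (\<forall>lam\<in>level deg n. g n (\<iota> n lam)
                    = (Tapp deg pd M n (\<lambda>mu. f (\<iota> n mu)) lam - f (\<iota> n lam)) / \<epsilon> n)) sequentially
               \<and> g \<longlonglongrightarrow> A f"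
    and T_markov: "markov_semigroup T"
    and T_gen: "generator_graph T = closure {(f, A f) | f. f \<in> F}"
begin

abbreviation S where "S n \<equiv> level deg n"
abbreviation U where "U n \<equiv> Tapp deg pd M n"

definition uclose :: "(nat \<Rightarrow> 'l \<Rightarrow> real) \<Rightarrow> (nat \<Rightarrow> 'l \<Rightarrow> real) \<Rightarrow> bool" where
  "uclose g h \<longleftrightarrow> (\<forall>e>0. eventually (\<lambda>n. \<forall>l\<in>S n. \<bar>g n l - h n l\<bar> \<le> e) sequentially)"

lemma finite_S: "finite (S n)"
  using setting unfolding coherent_setting_def by auto

lemma Tmat_nonneg:
  assumes "l \<in> S n" shows "Tmat deg pd M n l l' \<ge> 0"
proof -
  have Mpos: "\<And>n l. l \<in> S n \<Longrightarrow> M n l > 0" and pdnn: "\<And>a b. pd a b \<ge> 0"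
    using setting unfolding coherent_setting_def by auto
  have dl: "deg l = n" using assms by (simp add: level_def)
  show ?thesis unfolding Tmat_def pup_def dl
    using Mpos[OF assms] Mpos pdnn
    by (intro sum_nonneg mult_nonneg_nonneg divide_nonneg_pos) (auto simp: less_imp_le)
qed

lemma Tmat_sum:
  assumes "l \<in> S n" shows "(\<Sum>l'\<in>S n. Tmat deg pd M n l l') = 1"
proof -
  have Mpos: "\<And>n l. l \<in> S n \<Longrightarrow> M n l > 0"
    and pdsum: "\<And>lam. deg lam \<ge> 1 \<Longrightarrow> (\<Sum>mu\<in>level deg (deg lam - 1). pd lam mu) = 1"
    and coh: "\<And>n mu. n \<ge> 1 \<Longrightarrow> mu \<in> level deg (n - 1) \<Longrightarrow>
        (\<Sum>lam\<in>level deg n. M n lam * pd lam mu) = M (n - 1) mu"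
    using setting unfolding coherent_setting_def by auto
  have dl: "deg l = n" using assms by (simp add: level_def)
  have "(\<Sum>l'\<in>S n. Tmat deg pd M n l l')
      = (\<Sum>nu\<in>S (Suc n). pup deg pd M l nu * (\<Sum>l'\<in>S n. pd nu l'))"
    unfolding Tmat_def by (simp add: sum_distrib_left sum.swap[of _ "S n"])
  also have "\<dots> = (\<Sum>nu\<in>S (Suc n). pup deg pd M l nu)"
  proof (rule sum.cong)
    fix nu assume "nu \<in> S (Suc n)"
    then have "deg nu = Suc n" by (simp add: level_def)
    then have "(\<Sum>l'\<in>S n. pd nu l') = 1" using pdsum[of nu] by simp
    then show "pup deg pd M l nu * (\<Sum>l'\<in>S n. pd nu l') = pup deg pd M l nu" by simp
  qed simp
  also have "\<dots> = (\<Sum>nu\<in>S (Suc n). M (Suc n) nu * pd nu l) / M n l"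
    unfolding pup_def dl by (simp add: sum_divide_distrib)
  also have "(\<Sum>nu\<in>S (Suc n). M (Suc n) nu * pd nu l) = M n l"
    using coh[of "Suc n" l] assms by simp
  finally show ?thesis using Mpos[OF assms] by simp
qed

lemma U1:
  assumes "\<forall>l\<in>S n. \<bar>a l - b l\<bar> \<le> c" "l \<in> S n"
  shows "\<bar>U n a l - U n b l\<bar> \<le> c"
proof -
  have "U n a l - U n b l = (\<Sum>l'\<in>S n. Tmat deg pd M n l l' * (a l' - b l'))"
    unfolding Tapp_def by (simp add: sum_subtractf right_diff_distrib)
  also have "\<bar>\<dots>\<bar> \<le> (\<Sum>l'\<in>S n. \<bar>Tmat deg pd M n l l' * (a l' - b l')\<bar>)" by (rule sum_abs)
  also have "\<dots> \<le> (\<Sum>l'\<in>S n. Tmat deg pd M n l l' * c)"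
  proof (rule sum_mono)
    fix l' assume l': "l' \<in> S n"
    have "\<bar>Tmat deg pd M n l l' * (a l' - b l')\<bar> = Tmat deg pd M n l l' * \<bar>a l' - b l'\<bar>"
      using Tmat_nonneg[OF assms(2)] by (simp add: abs_mult)
    also have "\<dots> \<le> Tmat deg pd M n l l' * c"
      using Tmat_nonneg[OF assms(2)] assms(1) l' by (intro mult_left_mono) auto
    finally show "\<bar>Tmat deg pd M n l l' * (a l' - b l')\<bar> \<le> Tmat deg pd M n l l' * c" .
  qed
  also have "\<dots> = c" using Tmat_sum[OF assms(2)] by (simp add: sum_distrib_right[symmetric])
  finally show ?thesis .
qed

lemma U_lip:
  assumes "\<forall>l\<in>S n. \<bar>a l - b l\<bar> \<le> c"
  shows "\<forall>l\<in>S n. \<bar>(U n ^^ d) a l - (U n ^^ d) b l\<bar> \<le> c"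
proof (induction d)
  case 0 then show ?case using assms by simp
next
  case (Suc d) then show ?case using U1 by simp
qed

lemma U_eq:
  assumes "\<forall>l\<in>S n. a l = b l" "l \<in> S n"
  shows "U n a l = U n b l"
  using U1[of n a b 0 l] assms by simp

lemma U_lin_sum:
  "U n (\<lambda>l. \<Sum>b\<in>B. c b * g b l) l = (\<Sum>b\<in>B. c b * U n (g b) l)"
  unfolding Tapp_def by (simp add: sum_distrib_left sum.swap[of _ B] mult_ac)

lemma T_lin: "t \<ge> 0 \<Longrightarrow> linear (T t)"
  using T_markov unfolding markov_semigroup_def by (auto intro: bounded_linear.linear)

lemma const_scale: "const_bcontfun c = c *\<^sub>R (const_bcontfun 1 :: 'x \<Rightarrow>\<^sub>C real)"
  by (rule bcontfun_eqI) simp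

lemma T_contr:
  assumes t: "t \<ge> 0" shows "norm (T t f) \<le> norm f"
proof -
  have lin: "linear (T t)" by (rule T_lin[OF t])
  have T1: "T t (const_bcontfun 1) = const_bcontfun 1"
    using T_markov t unfolding markov_semigroup_def by auto
  have pos: "\<And>g. (\<forall>x. apply_bcontfun g x \<ge> 0) \<Longrightarrow> (\<forall>x. apply_bcontfun (T t g) x \<ge> 0)"
    using T_markov t unfolding markov_semigroup_def by auto
  define c where "c = norm f"
  have fx: "\<bar>apply_bcontfun f x\<bar> \<le> c" for x using norm_bounded[of f x] unfolding c_def by simp
  have Tc: "T t (const_bcontfun c) = const_bcontfun c"
    by (subst (1 2) const_scale) (simp add: linear_scale[OF lin] T1)
  have "\<forall>x. apply_bcontfun (T t (const_bcontfun c - f)) x \<ge> 0"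
  proof (intro pos allI)
    fix x show "0 \<le> apply_bcontfun (const_bcontfun c - f) x"
      using fx[of x] by (simp add: abs_le_iff)
  qed
  then have up: "apply_bcontfun (T t f) x \<le> c" for x
    by (simp add: linear_diff[OF lin] Tc)
  have "\<forall>x. apply_bcontfun (T t (const_bcontfun c + f)) x \<ge> 0"
  proof (intro pos allI)
    fix x show "0 \<le> apply_bcontfun (const_bcontfun c + f) x"
      using fx[of x] by (simp add: abs_le_iff)
  qed
  then have "0 \<le> c + apply_bcontfun (T t f) x" for x
    by (simp add: linear_add[OF lin] Tc)
  then have lo: "- c \<le> apply_bcontfun (T t f) x" for x
    by (smt (verit))
  show ?thesis unfolding c_def[symmetric]
  proof (rule norm_bound)
    fix x show "norm (apply_bcontfun (T t f) x) \<le> c" using up[of x] lo[of x] by simp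
  qed
qed

lemma T_lip:
  assumes t: "t \<ge> 0" shows "norm (T t f - T t g) \<le> norm (f - g)"
  using T_contr[OF t, of "f - g"] by (simp add: linear_diff[OF T_lin[OF t]])

lemma telescope:
  assumes s: "s \<ge> 0" and step: "\<And>j. j < d \<Longrightarrow> norm (x (Suc j) - T s (x j)) \<le> c"
  shows "norm (x d - T (real d * s) (x 0)) \<le> real d * c"
  using step
proof (induction d)
  case 0
  have "T 0 (x 0) = x 0" using T_markov unfolding markov_semigroup_def by auto
  then show ?case by simp
next
  case (Suc d)
  have sg: "T (s + real d * s) (x 0) = T s (T (real d * s) (x 0))"
    using T_markov s unfolding markov_semigroup_def by auto
  have "norm (x (Suc d) - T (real (Suc d) * s) (x 0))
      = norm ((x (Suc d) - T s (x d)) + (T s (x d) - T s (T (real d * s) (x 0))))"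
    using sg by (simp add: algebra_simps)
  also have "\<dots> \<le> norm (x (Suc d) - T s (x d)) + norm (T s (x d) - T s (T (real d * s) (x 0)))"
    by (rule norm_triangle_ineq)
  also have "\<dots> \<le> c + real d * c"
    using Suc.prems[of d] Suc.IH Suc.prems T_lip[OF s, of "x d" "T (real d * s) (x 0)"]
    by (intro add_mono) auto
  finally show ?case by (simp add: algebra_simps)
qed

lemma uclose_from_bound:
  assumes "r \<longlonglongrightarrow> 0" "eventually (\<lambda>n. \<forall>l\<in>S n. \<bar>g n l - h n l\<bar> \<le> r n) sequentially"
  shows "uclose g h"
  unfolding uclose_def
proof (intro allI impI)
  fix e :: real assume e: "e > 0"
  have "eventually (\<lambda>n. \<bar>r n\<bar> < e) sequentially"
    using assms(1) e by (auto simp: tendsto_iff dist_real_def)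
  with assms(2) show "eventually (\<lambda>n. \<forall>l\<in>S n. \<bar>g n l - h n l\<bar> \<le> e) sequentially"
    by eventually_elim force
qed

end




context tkl
begin

lemma gen_lim:
  assumes "b \<in> F"
  shows "(\<lambda>n. (1 / \<epsilon> n) *\<^sub>R (T (\<epsilon> n) b - b)) \<longlonglongrightarrow> A b"
proof -
  have "(b, A b) \<in> {(f, A f) | f. f \<in> F}" using assms by blast
  then have "(b, A b) \<in> generator_graph T"
    unfolding T_gen using closure_subset by (rule subsetD[rotated])
  then have lim: "((\<lambda>h. (1 / h) *\<^sub>R (T h b - b)) \<longlongrightarrow> A b) (at_right 0)"
    unfolding generator_graph_def by simp
  have "filterlim \<epsilon> (at_right 0) sequentially"
    using eps_lim eps_pos by (intro tendsto_imp_filterlim_at_right) auto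
  from filterlim_compose[OF lim this] show ?thesis .
qed

lemma TK_F:
  assumes fF: "f \<in> Fm m" and dlim: "(\<lambda>n. real (d n) * \<epsilon> n) \<longlonglongrightarrow> t" and t: "t \<ge> 0"
  shows "uclose (\<lambda>n. (U n ^^ d n) (\<lambda>l. f (\<iota> n l))) (\<lambda>n l. T t f (\<iota> n l))"
proof -
  obtain B where B: "finite B" "span B = Fm m" using Fm_findim by blast
  obtain B0 where B0: "B0 \<subseteq> B" "independent B0" "B \<subseteq> span B0"
    using maximal_independent_subset[of B] by blast
  have finB0: "finite B0" using B0(1) B(1) finite_subset by blast
  have spanB0: "span B0 = Fm m"
  proof
    show "span B0 \<subseteq> Fm m" using span_mono[OF B0(1)] B(2) by simp
    show "Fm m \<subseteq> span B0" using span_minimal[OF B0(3) subspace_span] B(2) by simp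
  qed
  have B0F: "b \<in> Fm m" if "b \<in> B0" for b using that span_superset spanB0 by blast
  have FmF: "Fm m \<subseteq> F" using Fm_exhaust by blast
  obtain \<delta> where \<delta>: "\<delta> > 0" "\<And>c. \<delta> * (\<Sum>b\<in>B0. \<bar>c b\<bar>) \<le> norm (\<Sum>b\<in>B0. c b *\<^sub>R b)"
    using fd_bound[OF finB0 B0(2)] by blast
  define coef where "coef h = representation B0 h" for h
  have rep: "(\<Sum>b\<in>B0. coef h b *\<^sub>R b) = h" if "h \<in> Fm m" for h
    unfolding coef_def using that spanB0 finB0 B0(2)
    by (intro real_vector.sum_representation_eq) auto
  have coefb: "(\<Sum>b\<in>B0. \<bar>coef h b\<bar>) \<le> norm h / \<delta>" if "h \<in> Fm m" for h
  proof -
    have "\<delta> * (\<Sum>b\<in>B0. \<bar>coef h b\<bar>) \<le> norm h" using \<delta>(2)[of "coef h"] rep[OF that] by simp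
    then show ?thesis by (subst pos_le_divide_eq[OF \<delta>(1)]) (simp add: mult.commute)
  qed
  define Pg where "Pg b g \<longleftrightarrow> eventually (\<lambda>n. g n \<in> Fm m \<and>
                 (\<forall>lam\<in>S n. g n (\<iota> n lam)
                    = (U n (\<lambda>mu. b (\<iota> n mu)) lam - b (\<iota> n lam)) / \<epsilon> n)) sequentially
               \<and> g \<longlonglongrightarrow> A b" for b :: "'x \<Rightarrow>\<^sub>C real" and g :: "nat \<Rightarrow> ('x \<Rightarrow>\<^sub>C real)"
  have "\<forall>b\<in>B0. \<exists>g. Pg b g"
  proof (intro ballI)
    fix b assume "b \<in> B0"
    from A4[OF B0F[OF this]] show "\<exists>g. Pg b g" unfolding Pg_def .
  qed
  then have "\<exists>G. \<forall>b\<in>B0. Pg b (G b)" by (rule bchoice)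
  then obtain G where G0: "\<forall>b\<in>B0. Pg b (G b)" by blast
  have G: "\<And>b. b \<in> B0 \<Longrightarrow> eventually (\<lambda>n. G b n \<in> Fm m \<and>
                 (\<forall>lam\<in>S n. G b n (\<iota> n lam)
                    = (U n (\<lambda>mu. b (\<iota> n mu)) lam - b (\<iota> n lam)) / \<epsilon> n)) sequentially"
      "\<And>b. b \<in> B0 \<Longrightarrow> G b \<longlonglongrightarrow> A b"
    using G0 unfolding Pg_def by auto
  have evG: "eventually (\<lambda>n. \<forall>b\<in>B0. G b n \<in> Fm m \<and>
                 (\<forall>lam\<in>S n. G b n (\<iota> n lam)
                    = (U n (\<lambda>mu. b (\<iota> n mu)) lam - b (\<iota> n lam)) / \<epsilon> n)) sequentially"
    using G(1) finB0 by (intro eventually_ball_finite) auto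
  have "\<forall>b\<in>B0. \<exists>K>0. \<forall>n. norm (G b n) \<le> K"
  proof
    fix b assume "b \<in> B0"
    then have "Bseq (G b)" using G(2) convergent_imp_Bseq convergentI by blast
    then show "\<exists>K>0. \<forall>n. norm (G b n) \<le> K" by (rule BseqE) blast
  qed
  then have "\<exists>Kb. \<forall>b\<in>B0. Kb b > 0 \<and> (\<forall>n. norm (G b n) \<le> Kb b)" by (rule bchoice)
  then obtain Kb where Kb0: "\<forall>b\<in>B0. Kb b > 0 \<and> (\<forall>n. norm (G b n) \<le> Kb b)" by blast
  then have Kb: "\<And>b. b \<in> B0 \<Longrightarrow> Kb b > 0" "\<And>b n. b \<in> B0 \<Longrightarrow> norm (G b n) \<le> Kb b"
    by auto
  define K where "K = (\<Sum>b\<in>B0. Kb b)"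
  have K0: "K \<ge> 0" unfolding K_def using Kb(1) by (intro sum_nonneg) (auto intro: less_imp_le)
  have GK: "norm (G b n) \<le> K" if "b \<in> B0" for b n
  proof -
    have "Kb b \<le> K" unfolding K_def using that finB0 Kb(1)
      by (intro member_le_sum) (auto intro: less_imp_le)
    then show ?thesis using Kb(2)[OF that, of n] by linarith
  qed
  define L where "L = K / \<delta>"
  have L0: "L \<ge> 0" unfolding L_def using K0 \<delta>(1) by simp
  define Bn where "Bn n h = (\<Sum>b\<in>B0. coef h b *\<^sub>R G b n)" for n h
  have Bn_bound: "norm (Bn n h) \<le> L * norm h" if "h \<in> Fm m" for n h
  proof -
    have "norm (Bn n h) \<le> (\<Sum>b\<in>B0. norm (coef h b *\<^sub>R G b n))"
      unfolding Bn_def by (rule norm_sum)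
    also have "\<dots> \<le> (\<Sum>b\<in>B0. \<bar>coef h b\<bar> * K)"
      using GK by (intro sum_mono) (simp add: mult_left_mono)
    also have "\<dots> = K * (\<Sum>b\<in>B0. \<bar>coef h b\<bar>)" by (simp add: sum_distrib_left mult_ac)
    also have "\<dots> \<le> K * (norm h / \<delta>)" using coefb[OF that] K0 by (rule mult_left_mono)
    finally show ?thesis unfolding L_def by simp
  qed
  define step where "step n h = h + \<epsilon> n *\<^sub>R Bn n h" for n h
  define hs where "hs n j = (step n ^^ j) f" for n j
  define \<eta> where "\<eta> n = (\<Sum>b\<in>B0. norm ((1 / \<epsilon> n) *\<^sub>R (T (\<epsilon> n) b - b) - G b n))" for n
  have eta0: "\<eta> \<longlonglongrightarrow> 0"
  proof -
    have "(\<lambda>n. \<Sum>b\<in>B0. norm ((1 / \<epsilon> n) *\<^sub>R (T (\<epsilon> n) b - b) - G b n)) \<longlonglongrightarrow> (\<Sum>b\<in>B0. 0)"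
    proof (rule tendsto_sum)
      fix b assume b: "b \<in> B0"
      have "(\<lambda>n. (1 / \<epsilon> n) *\<^sub>R (T (\<epsilon> n) b - b) - G b n) \<longlonglongrightarrow> A b - A b"
        using gen_lim[of b] G(2)[OF b] FmF B0F[OF b] by (intro tendsto_diff) auto
      then show "(\<lambda>n. norm ((1 / \<epsilon> n) *\<^sub>R (T (\<epsilon> n) b - b) - G b n)) \<longlonglongrightarrow> 0"
        using tendsto_norm_zero by force
    qed
    then show ?thesis unfolding \<eta>_def by simp
  qed
  have eta_nn: "\<eta> n \<ge> 0" for n unfolding \<eta>_def by (intro sum_nonneg) auto
  have good: "\<forall>b\<in>B0. G b n \<in> Fm m \<and>
                 (\<forall>lam\<in>S n. G b n (\<iota> n lam)
                    = (U n (\<lambda>mu. b (\<iota> n mu)) lam - b (\<iota> n lam)) / \<epsilon> n)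
     \<Longrightarrow> (\<forall>j. hs n j \<in> Fm m \<and> (\<forall>l\<in>S n. hs n j (\<iota> n l) = (U n ^^ j) (\<lambda>l. f (\<iota> n l)) l))"
    for n
  proof -
    assume gn: "\<forall>b\<in>B0. G b n \<in> Fm m \<and>
                 (\<forall>lam\<in>S n. G b n (\<iota> n lam)
                    = (U n (\<lambda>mu. b (\<iota> n mu)) lam - b (\<iota> n lam)) / \<epsilon> n)"
    have stepFm: "step n h \<in> Fm m" if "h \<in> Fm m" for h
    proof -
      have "Bn n h \<in> Fm m" unfolding Bn_def using gn
        by (intro subspace_sum[OF Fm_subspace] subspace_scale[OF Fm_subspace]) auto
      then show ?thesis unfolding step_def using that
        by (intro subspace_add[OF Fm_subspace] subspace_scale[OF Fm_subspace])
    qed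
    have stepval: "step n h (\<iota> n l) = U n (\<lambda>mu. h (\<iota> n mu)) l" if h: "h \<in> Fm m" and l: "l \<in> S n" for h l
    proof -
      have hval: "h (\<iota> n mu) = (\<Sum>b\<in>B0. coef h b * b (\<iota> n mu))" for mu
        using rep[OF h] bsum_apply[of "coef h" "\<lambda>b. b" B0 "\<iota> n mu"] by simp
      have "step n h (\<iota> n l) = h (\<iota> n l) + \<epsilon> n * (\<Sum>b\<in>B0. coef h b * G b n (\<iota> n l))"
        unfolding step_def Bn_def by (simp add: bsum_apply)
      also have "(\<Sum>b\<in>B0. coef h b * G b n (\<iota> n l))
          = (\<Sum>b\<in>B0. coef h b * ((U n (\<lambda>mu. b (\<iota> n mu)) l - b (\<iota> n l)) / \<epsilon> n))"
        using gn l by (intro sum.cong) auto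
      also have "\<epsilon> n * \<dots> = (\<Sum>b\<in>B0. coef h b * U n (\<lambda>mu. b (\<iota> n mu)) l) - (\<Sum>b\<in>B0. coef h b * b (\<iota> n l))"
      proof -
        have pw: "\<epsilon> n * (coef h b * ((U n (\<lambda>mu. b (\<iota> n mu)) l - b (\<iota> n l)) / \<epsilon> n))
            = coef h b * U n (\<lambda>mu. b (\<iota> n mu)) l - coef h b * b (\<iota> n l)" for b
          using eps_pos[of n] by (simp add: field_simps)
        show ?thesis by (simp only: sum_distrib_left pw sum_subtractf)
      qed
      also have "(\<Sum>b\<in>B0. coef h b * U n (\<lambda>mu. b (\<iota> n mu)) l) = U n (\<lambda>mu. h (\<iota> n mu)) l"
        unfolding hval by (rule U_lin_sum[symmetric])
      finally show ?thesis using hval[of l] by simp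
    qed
    show ?thesis
    proof
      fix j show "hs n j \<in> Fm m \<and> (\<forall>l\<in>S n. hs n j (\<iota> n l) = (U n ^^ j) (\<lambda>l. f (\<iota> n l)) l)"
      proof (induction j)
        case 0 then show ?case using fF unfolding hs_def by simp
      next
        case (Suc j)
        have eqs: "hs n (Suc j) = step n (hs n j)" unfolding hs_def by simp
        show ?case
        proof
          show "hs n (Suc j) \<in> Fm m" using Suc stepFm eqs by simp
          show "\<forall>l\<in>S n. hs n (Suc j) (\<iota> n l) = (U n ^^ Suc j) (\<lambda>l. f (\<iota> n l)) l"
          proof
            fix l assume l: "l \<in> S n"
            have "hs n (Suc j) (\<iota> n l) = U n (\<lambda>mu. hs n j (\<iota> n mu)) l"
              using eqs stepval[of "hs n j" l] Suc l by simp
            also have "\<dots> = U n ((U n ^^ j) (\<lambda>l. f (\<iota> n l))) l"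
              using Suc l by (intro U_eq) auto
            finally show "hs n (Suc j) (\<iota> n l) = (U n ^^ Suc j) (\<lambda>l. f (\<iota> n l)) l" by simp
          qed
        qed
      qed
    qed
  qed
  have hs_norm: "norm (hs n j) \<le> exp (\<epsilon> n * L * j) * norm f" if hsF: "\<forall>j. hs n j \<in> Fm m" for n j
  proof -
    have "norm (hs n j) \<le> (1 + \<epsilon> n * L) ^ j * norm f"
    proof (induction j)
      case 0 then show ?case unfolding hs_def by simp
    next
      case (Suc j)
      have "norm (hs n (Suc j)) = norm (hs n j + \<epsilon> n *\<^sub>R Bn n (hs n j))"
        unfolding hs_def step_def by simp
      also have "\<dots> \<le> norm (hs n j) + \<epsilon> n * norm (Bn n (hs n j))"
        using eps_pos[of n] norm_triangle_ineq[of "hs n j" "\<epsilon> n *\<^sub>R Bn n (hs n j)"] by simp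
      also have "\<dots> \<le> norm (hs n j) + \<epsilon> n * (L * norm (hs n j))"
        using Bn_bound[of "hs n j" n] hsF eps_pos[of n] by (intro add_left_mono mult_left_mono) auto
      also have "\<dots> = (1 + \<epsilon> n * L) * norm (hs n j)" by (simp add: algebra_simps)
      also have "\<dots> \<le> (1 + \<epsilon> n * L) * ((1 + \<epsilon> n * L) ^ j * norm f)"
        using Suc eps_pos[of n] L0 by (intro mult_left_mono) auto
      finally show ?case by simp
    qed
    also have "(1 + \<epsilon> n * L) ^ j \<le> exp (\<epsilon> n * L) ^ j"
      using eps_pos[of n] L0 by (intro power_mono) (auto simp: exp_ge_add_one_self)
    also have "exp (\<epsilon> n * L) ^ j = exp (\<epsilon> n * L * j)"
      by (simp add: exp_of_nat_mult[symmetric] mult_ac)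
    finally show ?thesis by (simp add: mult_right_mono)
  qed
  have err: "norm (step n h - T (\<epsilon> n) h) \<le> \<epsilon> n * (norm h / \<delta>) * \<eta> n" if h: "h \<in> Fm m" for n h
  proof -
    have lin: "linear (T (\<epsilon> n))" using T_lin eps_pos[of n] by (simp add: less_imp_le)
    have e1: "T (\<epsilon> n) h = (\<Sum>b\<in>B0. coef h b *\<^sub>R T (\<epsilon> n) b)"
    proof -
      have "T (\<epsilon> n) h = T (\<epsilon> n) (\<Sum>b\<in>B0. coef h b *\<^sub>R b)" using rep[OF h] by simp
      also have "\<dots> = (\<Sum>b\<in>B0. T (\<epsilon> n) (coef h b *\<^sub>R b))" by (rule linear_sum[OF lin])
      also have "\<dots> = (\<Sum>b\<in>B0. coef h b *\<^sub>R T (\<epsilon> n) b)" by (simp add: linear_scale[OF lin])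
      finally show ?thesis .
    qed
    have e2: "step n h = (\<Sum>b\<in>B0. coef h b *\<^sub>R (b + \<epsilon> n *\<^sub>R G b n))"
      unfolding step_def Bn_def using rep[OF h]
      by (simp add: scaleR_add_right sum.distrib scaleR_sum_right scaleR_left_commute del: scaleR_scaleR)
    have "step n h - T (\<epsilon> n) h = (\<Sum>b\<in>B0. coef h b *\<^sub>R (\<epsilon> n *\<^sub>R (G b n - (1 / \<epsilon> n) *\<^sub>R (T (\<epsilon> n) b - b))))"
    proof -
      have pw3: "coef h b *\<^sub>R (b + \<epsilon> n *\<^sub>R G b n) - coef h b *\<^sub>R T (\<epsilon> n) b
          = coef h b *\<^sub>R (\<epsilon> n *\<^sub>R (G b n - (1 / \<epsilon> n) *\<^sub>R (T (\<epsilon> n) b - b)))" for b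
      proof -
        have c1: "\<epsilon> n * (1 / \<epsilon> n) = 1" using eps_pos[of n] by simp
        have q1: "\<epsilon> n *\<^sub>R (G b n - (1 / \<epsilon> n) *\<^sub>R (T (\<epsilon> n) b - b)) = \<epsilon> n *\<^sub>R G b n - (T (\<epsilon> n) b - b)"
          by (simp only: scaleR_diff_right scaleR_scaleR c1 scaleR_one)
        have q2: "b + \<epsilon> n *\<^sub>R G b n - T (\<epsilon> n) b = \<epsilon> n *\<^sub>R G b n - (T (\<epsilon> n) b - b)"
          by (simp add: algebra_simps)
        have "coef h b *\<^sub>R (b + \<epsilon> n *\<^sub>R G b n) - coef h b *\<^sub>R T (\<epsilon> n) b
            = coef h b *\<^sub>R (b + \<epsilon> n *\<^sub>R G b n - T (\<epsilon> n) b)"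
          by (rule scaleR_diff_right[symmetric])
        then show ?thesis unfolding q2 q1 .
      qed
      show ?thesis unfolding e1 e2 sum_subtractf[symmetric] pw3 ..
    qed
    also have "norm \<dots> \<le> (\<Sum>b\<in>B0. norm (coef h b *\<^sub>R (\<epsilon> n *\<^sub>R (G b n - (1 / \<epsilon> n) *\<^sub>R (T (\<epsilon> n) b - b)))))"
      by (rule norm_sum)
    also have "\<dots> \<le> (\<Sum>b\<in>B0. \<bar>coef h b\<bar> * (\<epsilon> n * \<eta> n))"
    proof (rule sum_mono)
      fix b assume b: "b \<in> B0"
      have "norm (G b n - (1 / \<epsilon> n) *\<^sub>R (T (\<epsilon> n) b - b)) \<le> \<eta> n"
        unfolding \<eta>_def using b finB0
        by (subst norm_minus_commute) (rule member_le_sum[where f = "\<lambda>b. norm ((1 / \<epsilon> n) *\<^sub>R (T (\<epsilon> n) b - b) - G b n)"], auto)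
      then show "norm (coef h b *\<^sub>R (\<epsilon> n *\<^sub>R (G b n - (1 / \<epsilon> n) *\<^sub>R (T (\<epsilon> n) b - b)))) \<le> \<bar>coef h b\<bar> * (\<epsilon> n * \<eta> n)"
      proof -
        have "norm (coef h b *\<^sub>R (\<epsilon> n *\<^sub>R (G b n - (1 / \<epsilon> n) *\<^sub>R (T (\<epsilon> n) b - b))))
            = \<bar>coef h b\<bar> * (\<epsilon> n * norm (G b n - (1 / \<epsilon> n) *\<^sub>R (T (\<epsilon> n) b - b)))"
          using eps_pos[of n] by (simp add: abs_mult)
        also have "\<dots> \<le> \<bar>coef h b\<bar> * (\<epsilon> n * \<eta> n)"
          using eps_pos[of n] \<open>norm (G b n - (1 / \<epsilon> n) *\<^sub>R (T (\<epsilon> n) b - b)) \<le> \<eta> n\<close>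
          by (intro mult_left_mono) auto
        finally show ?thesis .
      qed
    qed
    also have "\<dots> = (\<Sum>b\<in>B0. \<bar>coef h b\<bar>) * (\<epsilon> n * \<eta> n)" by (simp add: sum_distrib_right)
    also have "\<dots> \<le> (norm h / \<delta>) * (\<epsilon> n * \<eta> n)"
      using coefb[OF h] eps_pos[of n] eta_nn[of n] by (intro mult_right_mono) auto
    finally show ?thesis by (simp add: mult_ac)
  qed
  define r where "r n = (real (d n) * \<epsilon> n) * (exp (L * (real (d n) * \<epsilon> n)) * norm f / \<delta>) * \<eta> n
      + norm (T (real (d n) * \<epsilon> n) f - T t f)" for n
  have r0: "r \<longlonglongrightarrow> 0"
  proof -
    have "(\<lambda>n. (real (d n) * \<epsilon> n) * (exp (L * (real (d n) * \<epsilon> n)) * norm f / \<delta>) * \<eta> n)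
        \<longlonglongrightarrow> t * (exp (L * t) * norm f / \<delta>) * 0"
      using \<delta>(1) by (intro tendsto_intros dlim eta0) auto
    moreover have "(\<lambda>n. norm (T (real (d n) * \<epsilon> n) f - T t f)) \<longlonglongrightarrow> 0"
    proof -
      have cont: "continuous_on {0..} (\<lambda>t. T t f)" using T_markov unfolding markov_semigroup_def by auto
      have "(\<lambda>n. T (real (d n) * \<epsilon> n) f) \<longlonglongrightarrow> T t f"
        using eps_pos t by (intro continuous_on_tendsto_compose[OF cont dlim]) (auto simp: less_imp_le)
      then show ?thesis using LIM_zero tendsto_norm_zero by blast
    qed
    ultimately have "r \<longlonglongrightarrow> t * (exp (L * t) * norm f / \<delta>) * 0 + 0"
      unfolding r_def by (rule tendsto_add)
    then show ?thesis by simp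
  qed
  show ?thesis
  proof (rule uclose_from_bound[OF r0])
    show "eventually (\<lambda>n. \<forall>l\<in>S n. \<bar>(U n ^^ d n) (\<lambda>l. f (\<iota> n l)) l - T t f (\<iota> n l)\<bar> \<le> r n) sequentially"
      using evG
    proof eventually_elim
      case (elim n)
      have hsP: "\<forall>j. hs n j \<in> Fm m \<and> (\<forall>l\<in>S n. hs n j (\<iota> n l) = (U n ^^ j) (\<lambda>l. f (\<iota> n l)) l)"
        using good[OF elim] .
      have en: "\<epsilon> n \<ge> 0" using eps_pos[of n] by simp
      define E where "E = exp (L * (real (d n) * \<epsilon> n)) * norm f"
      have stepb: "norm (hs n (Suc j) - T (\<epsilon> n) (hs n j)) \<le> \<epsilon> n * (E / \<delta>) * \<eta> n" if j: "j < d n" for j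
      proof -
        have "norm (hs n (Suc j) - T (\<epsilon> n) (hs n j)) \<le> \<epsilon> n * (norm (hs n j) / \<delta>) * \<eta> n"
          using err[of "hs n j" n] hsP unfolding hs_def by simp
        also have "\<dots> \<le> \<epsilon> n * (E / \<delta>) * \<eta> n"
        proof -
          have "norm (hs n j) \<le> exp (\<epsilon> n * L * j) * norm f" using hs_norm hsP by blast
          also have "\<dots> \<le> E" unfolding E_def
          proof (intro mult_right_mono)
            have "real j * \<epsilon> n \<le> real (d n) * \<epsilon> n" using j en by (intro mult_right_mono) auto
            then have "\<epsilon> n * L * real j \<le> L * (real (d n) * \<epsilon> n)" using L0
              by (metis mult.commute mult.left_commute mult_left_mono)
            then show "exp (\<epsilon> n * L * real j) \<le> exp (L * (real (d n) * \<epsilon> n))" by simp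
          qed simp
          finally show ?thesis using \<delta>(1) en eta_nn[of n]
            by (intro mult_right_mono mult_left_mono divide_right_mono) auto
        qed
        finally show ?thesis .
      qed
      have tel: "norm (hs n (d n) - T (real (d n) * \<epsilon> n) (hs n 0)) \<le> real (d n) * (\<epsilon> n * (E / \<delta>) * \<eta> n)"
        by (rule telescope[where x="hs n" and d="d n", OF en stepb])
      have hs0: "hs n 0 = f" unfolding hs_def by simp
      show ?case
      proof
        fix l assume l: "l \<in> S n"
        have "\<bar>(U n ^^ d n) (\<lambda>l. f (\<iota> n l)) l - T t f (\<iota> n l)\<bar>
            = \<bar>(hs n (d n) - T (real (d n) * \<epsilon> n) f) (\<iota> n l) + (T (real (d n) * \<epsilon> n) f - T t f) (\<iota> n l)\<bar>"
          using hsP l by simp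
        also have "\<dots> \<le> norm (hs n (d n) - T (real (d n) * \<epsilon> n) f) + norm (T (real (d n) * \<epsilon> n) f - T t f)"
          using norm_bounded[of "hs n (d n) - T (real (d n) * \<epsilon> n) f" "\<iota> n l"]
            norm_bounded[of "T (real (d n) * \<epsilon> n) f - T t f" "\<iota> n l"]
          by (intro order_trans[OF abs_triangle_ineq]) (auto intro: add_mono)
        also have "\<dots> \<le> r n"
          using tel unfolding hs0 r_def E_def by (simp add: mult_ac)
        finally show "\<bar>(U n ^^ d n) (\<lambda>l. f (\<iota> n l)) l - T t f (\<iota> n l)\<bar> \<le> r n" .
      qed
    qed
  qed
qed

lemma TK:
  fixes f :: "'x \<Rightarrow>\<^sub>C real"
  assumes dlim: "(\<lambda>n. real (d n) * \<epsilon> n) \<longlonglongrightarrow> t" and t: "t \<ge> 0"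
  shows "uclose (\<lambda>n. (U n ^^ d n) (\<lambda>l. f (\<iota> n l))) (\<lambda>n l. T t f (\<iota> n l))"
  unfolding uclose_def
proof (intro allI impI)
  fix e :: real assume e: "e > 0"
  have "f \<in> closure F" using F_dense by simp
  then obtain f' where f': "f' \<in> F" "dist f' f < e / 3"
    using e unfolding closure_approachable by (metis divide_pos_pos zero_less_numeral)
  then obtain m where fm: "f' \<in> Fm m" using Fm_exhaust by blast
  have "eventually (\<lambda>n. \<forall>l\<in>S n. \<bar>(U n ^^ d n) (\<lambda>l. f' (\<iota> n l)) l - T t f' (\<iota> n l)\<bar> \<le> e / 3) sequentially"
  proof -
    have "e / 3 > 0" using e by simp
    then show ?thesis using TK_F[OF fm dlim t] unfolding uclose_def by blast
  qed
  then show "eventually (\<lambda>n. \<forall>l\<in>S n. \<bar>(U n ^^ d n) (\<lambda>l. f (\<iota> n l)) l - T t f (\<iota> n l)\<bar> \<le> e) sequentially"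
  proof eventually_elim
    case (elim n)
    have ff: "\<forall>l\<in>S n. \<bar>f (\<iota> n l) - f' (\<iota> n l)\<bar> \<le> dist f' f"
      using norm_bounded[of "f - f'"] by (simp add: dist_norm norm_minus_commute)
    have tt: "\<bar>T t f' x - T t f x\<bar> \<le> dist f' f" for x
      using norm_bounded[of "T t f' - T t f" x] T_lip[OF t, of f' f] by (simp add: dist_norm)
    show ?case
    proof
      fix l assume l: "l \<in> S n"
      have a: "\<bar>(U n ^^ d n) (\<lambda>l. f (\<iota> n l)) l - (U n ^^ d n) (\<lambda>l. f' (\<iota> n l)) l\<bar> \<le> dist f' f"
        using U_lip[OF ff] l by blast
      show "\<bar>(U n ^^ d n) (\<lambda>l. f (\<iota> n l)) l - T t f (\<iota> n l)\<bar> \<le> e"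
        using a elim[rule_format, OF l] tt[of "\<iota> n l"] f'(2) by linarith
    qed
  qed
qed

end




lemma bmul_in: "f \<in> bcontfun \<Longrightarrow> g \<in> bcontfun \<Longrightarrow> (\<lambda>x. f x * g x :: real) \<in> bcontfun"
proof -
  assume f: "f \<in> bcontfun" and g: "g \<in> bcontfun"
  obtain F where F: "f = apply_bcontfun F" using bcontfunE[OF f] by blast
  obtain G where G: "g = apply_bcontfun G" using bcontfunE[OF g] by blast
  show ?thesis unfolding F G
  proof (rule bcontfun_normI)
    show "continuous_on UNIV (\<lambda>x. apply_bcontfun F x * apply_bcontfun G x)"
      by (intro continuous_intros) auto
    fix x
    show "norm (apply_bcontfun F x * apply_bcontfun G x) \<le> norm F * norm G"
      unfolding norm_mult using norm_bounded[of F x] norm_bounded[of G x]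
      by (intro mult_mono) auto
  qed
qed

definition bmul :: "('a::topological_space \<Rightarrow>\<^sub>C real) \<Rightarrow> ('a \<Rightarrow>\<^sub>C real) \<Rightarrow> ('a \<Rightarrow>\<^sub>C real)" where
  "bmul f g = Bcontfun (\<lambda>x. apply_bcontfun f x * apply_bcontfun g x)"

lemma bmul_apply[simp]: "apply_bcontfun (bmul f g) x = apply_bcontfun f x * apply_bcontfun g x"
  unfolding bmul_def by (subst Bcontfun_inverse) (auto intro: bmul_in apply_bcontfun)

lemma kk_lim:
  assumes eps_pos: "\<And>n. (\<epsilon>::nat\<Rightarrow>real) n > 0" and eps_lim: "\<epsilon> \<longlonglongrightarrow> 0" and t: "(t::real) \<ge> 0"
  shows "(\<lambda>n. real (nat \<lfloor>t / \<epsilon> n\<rfloor>) * \<epsilon> n) \<longlonglongrightarrow> t"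
proof (rule tendsto_sandwich[of "\<lambda>n. t - \<epsilon> n" _ sequentially "\<lambda>n. t"])
  have eq: "real (nat \<lfloor>t / \<epsilon> n\<rfloor>) = real_of_int \<lfloor>t / \<epsilon> n\<rfloor>" for n
    using t eps_pos[of n] by (intro of_nat_nat) simp
  show "\<forall>\<^sub>F n in sequentially. t - \<epsilon> n \<le> real (nat \<lfloor>t / \<epsilon> n\<rfloor>) * \<epsilon> n"
  proof (intro always_eventually allI)
    fix n
    have "t / \<epsilon> n - 1 < real_of_int \<lfloor>t / \<epsilon> n\<rfloor>" by (rule real_of_int_floor_gt_diff_one)
    then have "(t / \<epsilon> n - 1) * \<epsilon> n \<le> real_of_int \<lfloor>t / \<epsilon> n\<rfloor> * \<epsilon> n"
      using eps_pos[of n] by (intro mult_right_mono) auto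
    then show "t - \<epsilon> n \<le> real (nat \<lfloor>t / \<epsilon> n\<rfloor>) * \<epsilon> n"
      using eps_pos[of n] by (simp add: eq left_diff_distrib)
  qed
  show "\<forall>\<^sub>F n in sequentially. real (nat \<lfloor>t / \<epsilon> n\<rfloor>) * \<epsilon> n \<le> t"
  proof (intro always_eventually allI)
    fix n
    have "real_of_int \<lfloor>t / \<epsilon> n\<rfloor> * \<epsilon> n \<le> t / \<epsilon> n * \<epsilon> n"
      using eps_pos[of n] by (intro mult_right_mono) auto
    then show "real (nat \<lfloor>t / \<epsilon> n\<rfloor>) * \<epsilon> n \<le> t"
      using eps_pos[of n] by (simp add: eq)
  qed
  show "(\<lambda>n. t - \<epsilon> n) \<longlonglongrightarrow> t" using tendsto_diff[OF tendsto_const eps_lim, of t] by simp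
qed simp

context tkl
begin

lemma Tapp_stepop: "Tapp deg pd M n = stepop (S n) (Tmat deg pd M n)"
  by (intro ext) (simp add: Tapp_def stepop_def)

lemma uclose_U:
  fixes f :: "'x \<Rightarrow>\<^sub>C real"
  assumes g: "uclose g (\<lambda>n l. f (\<iota> n l))" and dlim: "(\<lambda>n. real (d n) * \<epsilon> n) \<longlonglongrightarrow> t" and t: "t \<ge> 0"
  shows "uclose (\<lambda>n. (U n ^^ d n) (g n)) (\<lambda>n l. T t f (\<iota> n l))"
  unfolding uclose_def
proof (intro allI impI)
  fix e :: real assume e: "e > 0"
  then have e2: "e / 2 > 0" by simp
  have ev1: "eventually (\<lambda>n. \<forall>l\<in>S n. \<bar>g n l - f (\<iota> n l)\<bar> \<le> e / 2) sequentially"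
    using g e2 unfolding uclose_def by blast
  have ev2: "eventually (\<lambda>n. \<forall>l\<in>S n. \<bar>(U n ^^ d n) (\<lambda>l. f (\<iota> n l)) l - T t f (\<iota> n l)\<bar> \<le> e / 2) sequentially"
    using TK[OF dlim t, of f] e2 unfolding uclose_def by blast
  show "eventually (\<lambda>n. \<forall>l\<in>S n. \<bar>(U n ^^ d n) (g n) l - T t f (\<iota> n l)\<bar> \<le> e) sequentially"
    using ev1 ev2
  proof eventually_elim
    case (elim n)
    have a: "\<forall>l\<in>S n. \<bar>(U n ^^ d n) (g n) l - (U n ^^ d n) (\<lambda>l. f (\<iota> n l)) l\<bar> \<le> e / 2"
      by (rule U_lip) (use elim in auto)
    show ?case
    proof
      fix l assume l: "l \<in> S n"
      show "\<bar>(U n ^^ d n) (g n) l - T t f (\<iota> n l)\<bar> \<le> e"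
        using a[rule_format, OF l] elim(2)[rule_format, OF l] by linarith
    qed
  qed
qed

lemma uclose_mult:
  fixes f1 f2 :: "'x \<Rightarrow>\<^sub>C real"
  assumes g1: "uclose g1 (\<lambda>n l. f1 (\<iota> n l))" and g2: "uclose g2 (\<lambda>n l. f2 (\<iota> n l))"
  shows "uclose (\<lambda>n l. g1 n l * g2 n l) (\<lambda>n l. f1 (\<iota> n l) * f2 (\<iota> n l))"
  unfolding uclose_def
proof (intro allI impI)
  fix e :: real assume e: "e > 0"
  define e' where "e' = min 1 (e / (norm f1 + norm f2 + 1))"
  have e'0: "e' > 0" unfolding e'_def using e by (simp add: add_nonneg_pos)
  have e'1: "e' \<le> 1" unfolding e'_def by simp
  have e'2: "e' * (norm f1 + norm f2 + 1) \<le> e"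
    unfolding e'_def using e
    by (metis add_nonneg_pos min.cobounded2 norm_ge_zero pos_le_divide_eq zero_less_one add_nonneg_nonneg)
  have ev1: "eventually (\<lambda>n. \<forall>l\<in>S n. \<bar>g1 n l - f1 (\<iota> n l)\<bar> \<le> e') sequentially"
    using g1 e'0 unfolding uclose_def by blast
  have ev2: "eventually (\<lambda>n. \<forall>l\<in>S n. \<bar>g2 n l - f2 (\<iota> n l)\<bar> \<le> e') sequentially"
    using g2 e'0 unfolding uclose_def by blast
  show "eventually (\<lambda>n. \<forall>l\<in>S n. \<bar>g1 n l * g2 n l - f1 (\<iota> n l) * f2 (\<iota> n l)\<bar> \<le> e) sequentially"
    using ev1 ev2
  proof eventually_elim
    case (elim n)
    show ?case
    proof
      fix l assume l: "l \<in> S n"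
      define a where "a = g1 n l" define a' where "a' = f1 (\<iota> n l)"
      define b where "b = g2 n l" define b' where "b' = f2 (\<iota> n l)"
      have ha: "\<bar>a - a'\<bar> \<le> e'" and hb: "\<bar>b - b'\<bar> \<le> e'"
        using elim l unfolding a_def a'_def b_def b'_def by auto
      have a': "\<bar>a'\<bar> \<le> norm f1" unfolding a'_def using norm_bounded[of f1] by simp
      have b': "\<bar>b'\<bar> \<le> norm f2" unfolding b'_def using norm_bounded[of f2] by simp
      have "\<bar>a\<bar> \<le> norm f1 + 1" using ha a' e'1 by linarith
      have "a * b - a' * b' = a * (b - b') + (a - a') * b'" by (simp add: algebra_simps)
      then have "\<bar>a * b - a' * b'\<bar> \<le> \<bar>a\<bar> * \<bar>b - b'\<bar> + \<bar>a - a'\<bar> * \<bar>b'\<bar>"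
        by (metis abs_mult abs_triangle_ineq)
      also have "\<dots> \<le> (norm f1 + 1) * e' + e' * norm f2"
        using \<open>\<bar>a\<bar> \<le> norm f1 + 1\<close> ha hb b'
        by (intro add_mono mult_mono) auto
      also have "\<dots> = e' * (norm f1 + norm f2 + 1)" by (simp add: algebra_simps)
      also have "\<dots> \<le> e" by (rule e'2)
      finally show "\<bar>g1 n l * g2 n l - f1 (\<iota> n l) * f2 (\<iota> n l)\<bar> \<le> e"
        unfolding a_def a'_def b_def b'_def .
    qed
  qed
qed

lemma uclose_refl: fixes f :: "'x \<Rightarrow>\<^sub>C real" shows "uclose (\<lambda>n l. f (\<iota> n l)) (\<lambda>n l. f (\<iota> n l))"
  unfolding uclose_def by simp

end




lemma t_mono:
  fixes t :: "nat \<Rightarrow> real"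
  assumes inc: "\<And>i. Suc i < K \<Longrightarrow> t i < t (Suc i)"
  shows "i \<le> j \<Longrightarrow> j < K \<Longrightarrow> t i \<le> t j"
proof (induction j)
  case 0 then show ?case by simp
next
  case (Suc j)
  show ?case
  proof (cases "i = Suc j")
    case True then show ?thesis by simp
  next
    case False
    then have "i \<le> j" using Suc.prems by simp
    then have "t i \<le> t j" using Suc.IH Suc.prems by simp
    also have "t j < t (Suc j)" using inc Suc.prems by simp
    finally show ?thesis by simp
  qed
qed

locale mainl = tkl deg pd M \<iota> F Fm \<epsilon> A T
  for deg :: "'l \<Rightarrow> nat" and pd M and \<iota> :: "nat \<Rightarrow> 'l \<Rightarrow> 'x::metric_space" and F Fm \<epsilon> A T +
  fixes P :: "'x measure"
    and Om :: "'w measure"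
    and X :: "real \<Rightarrow> 'w \<Rightarrow> 'x"
    and Omc :: "nat \<Rightarrow> 'v measure"
    and Y :: "nat \<Rightarrow> nat \<Rightarrow> 'v \<Rightarrow> 'l"
  assumes P_prob: "prob_space P"
    and P_borel: "sets P = sets borel"
    and weak_conv: "\<And>f :: 'x \<Rightarrow>\<^sub>C real.
        (\<lambda>n. \<Sum>lam\<in>level deg n. M n lam * f (\<iota> n lam)) \<longlonglongrightarrow> (\<integral>x. f x \<partial>P)"
    and X_markov: "markov_process Om X T P"
    and Y_chain: "\<And>n. markov_chain (Omc n) (Y n) (level deg n) (M n) (Tmat deg pd M n)"
begin

lemma Om_prob: "prob_space Om" using X_markov unfolding markov_process_def by auto
lemma X_meas: "t \<ge> 0 \<Longrightarrow> X t \<in> measurable Om borel" using X_markov unfolding markov_process_def by auto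
lemma X0: "distr Om borel (X 0) = P" using X_markov unfolding markov_process_def by auto
lemma X_ce: fixes f :: "'x \<Rightarrow>\<^sub>C real" shows "s \<ge> 0 \<Longrightarrow> t \<ge> 0 \<Longrightarrow>
   AE w in Om. real_cond_exp Om (nat_filtration Om X s) (\<lambda>w. apply_bcontfun f (X (s + t) w)) w
                    = apply_bcontfun (T t f) (X s w)"
  using X_markov unfolding markov_process_def by auto

lemma bcf_meas: fixes f :: "'x \<Rightarrow>\<^sub>C real" shows "(\<lambda>x. apply_bcontfun f x) \<in> borel_measurable borel"
  by (rule borel_measurable_continuous_onI) simp

lemma filt_facts:
  assumes s: "s \<ge> 0"
  shows "space (nat_filtration Om X s) = space Om"
    and "sets (nat_filtration Om X s) = sigma_sets (space Om) (\<Union>u\<in>{0..s}. {X u -` B \<inter> space Om | B. B \<in> sets borel})"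
    and "(\<Union>u\<in>{0..s}. {X u -` B \<inter> space Om | B. B \<in> sets borel}) \<subseteq> sets Om"
proof -
  let ?G = "\<Union>u\<in>{0..s}. {X u -` B \<inter> space Om | B. B \<in> sets borel}"
  show G: "?G \<subseteq> sets Om"
  proof
    fix A assume "A \<in> ?G"
    then obtain u B where u: "u \<in> {0..s}" and B: "B \<in> sets borel" and A: "A = X u -` B \<inter> space Om"
      by blast
    have "X u \<in> measurable Om borel" using u by (intro X_meas) simp
    then show "A \<in> sets Om" unfolding A using B by (rule measurable_sets)
  qed
  have "?G \<subseteq> Pow (space Om)" using G sets.sets_into_space by blast
  then show "sets (nat_filtration Om X s) = sigma_sets (space Om) ?G"
    unfolding nat_filtration_def by (rule sets_measure_of)
  show "space (nat_filtration Om X s) = space Om"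
    unfolding nat_filtration_def by (rule space_measure_of_conv)
qed

lemma filt_sub: "s \<ge> 0 \<Longrightarrow> subalgebra Om (nat_filtration Om X s)"
  unfolding subalgebra_def using filt_facts[of s] sets.sigma_sets_subset[of _ Om] by simp

lemma filt_meas:
  assumes u: "0 \<le> u" "u \<le> s"
  shows "X u \<in> measurable (nat_filtration Om X s) borel"
proof (rule measurableI)
  have s: "s \<ge> 0" using u by simp
  fix A :: "'x set" assume A: "A \<in> sets borel"
  have "X u -` A \<inter> space Om \<in> (\<Union>u\<in>{0..s}. {X u -` B \<inter> space Om | B. B \<in> sets borel})"
  proof (rule UN_I)
    show "u \<in> {0..s}" using u by simp
    show "X u -` A \<inter> space Om \<in> {X u -` B \<inter> space Om | B. B \<in> sets borel}" using A by blast
  qed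
  then have "X u -` A \<inter> space Om \<in> sigma_sets (space Om) (\<Union>u\<in>{0..s}. {X u -` B \<inter> space Om | B. B \<in> sets borel})"
    by (rule sigma_sets.Basic)
  then show "X u -` A \<inter> space (nat_filtration Om X s) \<in> sets (nat_filtration Om X s)"
    using filt_facts[OF s] by simp
qed simp

lemma X_merge:
  fixes f :: "'x \<Rightarrow>\<^sub>C real"
  assumes s: "0 \<le> s" and dt: "0 \<le> dt"
    and Zm: "Z \<in> borel_measurable (nat_filtration Om X s)" and Zb: "\<And>w. \<bar>Z w\<bar> \<le> C"
  shows "(\<integral>w. Z w * f (X (s + dt) w) \<partial>Om) = (\<integral>w. Z w * T dt f (X s w) \<partial>Om)"
proof -
  interpret prob_space Om by (rule Om_prob)
  have fm: "finite_measure_subalgebra Om (nat_filtration Om X s)"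
    by (intro finite_measure_subalgebra.intro finite_measure_axioms)
      (simp add: finite_measure_subalgebra_axioms_def filt_sub[OF s])
  interpret sfs: sigma_finite_subalgebra Om "nat_filtration Om X s"
    by (rule finite_measure_subalgebra_is_sigma_finite[OF fm])
  have ZmOm: "Z \<in> borel_measurable Om" by (rule measurable_from_subalg[OF filt_sub[OF s] Zm])
  have gm: "(\<lambda>w. f (X (s + dt) w)) \<in> borel_measurable Om"
    using measurable_compose[OF X_meas bcf_meas] s dt by simp
  have hm: "(\<lambda>w. T dt f (X s w)) \<in> borel_measurable Om"
    using measurable_compose[OF X_meas bcf_meas] s by simp
  have int: "integrable Om (\<lambda>w. Z w * f (X (s + dt) w))"
  proof (rule integrable_const_bound[where B = "C * norm f"])
    show "AE w in Om. norm (Z w * f (X (s + dt) w)) \<le> C * norm f"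
    proof (intro AE_I2)
      fix w
      have "\<bar>Z w\<bar> * \<bar>f (X (s + dt) w)\<bar> \<le> C * norm f"
        using Zb[of w] norm_bounded[of f "X (s + dt) w"] by (intro mult_mono) auto
      then show "norm (Z w * f (X (s + dt) w)) \<le> C * norm f" by (simp add: abs_mult)
    qed
    show "(\<lambda>w. Z w * f (X (s + dt) w)) \<in> borel_measurable Om" using ZmOm gm by measurable
  qed
  have "(\<integral>w. Z w * f (X (s + dt) w) \<partial>Om)
      = (\<integral>w. Z w * real_cond_exp Om (nat_filtration Om X s) (\<lambda>w. f (X (s + dt) w)) w \<partial>Om)"
    by (rule sfs.real_cond_exp_intg(2)[OF int Zm gm, symmetric])
  also have "\<dots> = (\<integral>w. Z w * T dt f (X s w) \<partial>Om)"
  proof (rule integral_cong_AE)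
    show "(\<lambda>w. Z w * real_cond_exp Om (nat_filtration Om X s) (\<lambda>w. f (X (s + dt) w)) w) \<in> borel_measurable Om"
      using ZmOm borel_measurable_cond_exp2 by measurable
    show "(\<lambda>w. Z w * T dt f (X s w)) \<in> borel_measurable Om" using ZmOm hm by measurable
    show "AE w in Om. Z w * real_cond_exp Om (nat_filtration Om X s) (\<lambda>w. f (X (s + dt) w)) w
        = Z w * T dt f (X s w)"
      using X_ce[OF s dt, of f] by eventually_elim simp
  qed
  finally show ?thesis .
qed

lemma X_base:
  fixes f :: "'x \<Rightarrow>\<^sub>C real"
  assumes t: "0 \<le> t"
  shows "(\<integral>w. f (X t w) \<partial>Om) = (\<integral>x. T t f x \<partial>P)"
proof -
  have "(\<integral>w. f (X t w) \<partial>Om) = (\<integral>w. (\<lambda>w. 1) w * f (X (0 + t) w) \<partial>Om)" by simp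
  also have "\<dots> = (\<integral>w. (\<lambda>w. 1) w * T t f (X 0 w) \<partial>Om)"
    by (rule X_merge[where C = 1]) (use t in auto)
  also have "\<dots> = (\<integral>w. T t f (X 0 w) \<partial>Om)" by simp
  also have "\<dots> = (\<integral>x. T t f x \<partial>distr Om borel (X 0))"
    by (rule integral_distr[OF X_meas bcf_meas, symmetric]) simp
  finally show ?thesis unfolding X0 .
qed

lemma WC:
  fixes g :: "'x \<Rightarrow>\<^sub>C real"
  assumes phi: "uclose phi (\<lambda>n l. g (\<iota> n l))"
  shows "(\<lambda>n. \<Sum>l\<in>S n. M n l * phi n l) \<longlonglongrightarrow> (\<integral>x. g x \<partial>P)"
proof -
  have Mnn: "\<And>n l. l \<in> S n \<Longrightarrow> M n l \<ge> 0" and Msum: "\<And>n. (\<Sum>l\<in>S n. M n l) = 1"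
    using setting unfolding coherent_setting_def by (auto intro: less_imp_le)
  have d0: "(\<lambda>n. \<Sum>l\<in>S n. M n l * (phi n l - g (\<iota> n l))) \<longlonglongrightarrow> 0"
  proof (rule LIMSEQ_I)
    fix r :: real assume r: "r > 0"
    then have "r / 2 > 0" by simp
    then have "eventually (\<lambda>n. \<forall>l\<in>S n. \<bar>phi n l - g (\<iota> n l)\<bar> \<le> r / 2) sequentially"
      using phi unfolding uclose_def by blast
    then obtain N where N: "\<And>n. n \<ge> N \<Longrightarrow> \<forall>l\<in>S n. \<bar>phi n l - g (\<iota> n l)\<bar> \<le> r / 2"
      unfolding eventually_sequentially by blast
    show "\<exists>no. \<forall>n\<ge>no. norm ((\<Sum>l\<in>S n. M n l * (phi n l - g (\<iota> n l))) - 0) < r"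
    proof (intro exI allI impI)
      fix n assume n: "n \<ge> N"
      have "\<bar>\<Sum>l\<in>S n. M n l * (phi n l - g (\<iota> n l))\<bar> \<le> (\<Sum>l\<in>S n. \<bar>M n l * (phi n l - g (\<iota> n l))\<bar>)"
        by (rule sum_abs)
      also have "\<dots> \<le> (\<Sum>l\<in>S n. M n l * (r / 2))"
      proof (rule sum_mono)
        fix l assume l: "l \<in> S n"
        show "\<bar>M n l * (phi n l - g (\<iota> n l))\<bar> \<le> M n l * (r / 2)"
          using Mnn[OF l] N[OF n] l by (simp only: abs_mult abs_of_nonneg) (intro mult_left_mono, auto)
      qed
      also have "\<dots> = (\<Sum>l\<in>S n. M n l) * (r / 2)" by (rule sum_distrib_right[symmetric])
      also have "\<dots> = r / 2" using Msum[of n] by simp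
      finally show "norm ((\<Sum>l\<in>S n. M n l * (phi n l - g (\<iota> n l))) - 0) < r" using r by simp
    qed
  qed
  have "(\<lambda>n. (\<Sum>l\<in>S n. M n l * g (\<iota> n l)) + (\<Sum>l\<in>S n. M n l * (phi n l - g (\<iota> n l))))
      \<longlonglongrightarrow> (\<integral>x. g x \<partial>P) + 0"
    by (rule tendsto_add[OF weak_conv d0])
  moreover have "(\<Sum>l\<in>S n. M n l * g (\<iota> n l)) + (\<Sum>l\<in>S n. M n l * (phi n l - g (\<iota> n l)))
      = (\<Sum>l\<in>S n. M n l * phi n l)" for n
    by (simp add: sum.distrib[symmetric] algebra_simps)
  ultimately show ?thesis by simp
qed

end




context mainl
begin

lemma main_ind:
  "\<And>(t :: nat \<Rightarrow> real) (f :: nat \<Rightarrow> ('x \<Rightarrow>\<^sub>C real)) (g :: nat \<Rightarrow> nat \<Rightarrow> 'l \<Rightarrow> real).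
     0 \<le> t 0 \<Longrightarrow> (\<And>i. Suc i < Suc k \<Longrightarrow> t i < t (Suc i)) \<Longrightarrow>
     (\<And>i. i < Suc k \<Longrightarrow> uclose (\<lambda>n. g n i) (\<lambda>n l. f i (\<iota> n l))) \<Longrightarrow>
     (\<lambda>n. \<integral>w. (\<Prod>i<Suc k. g n i (Y n (nat \<lfloor>t i / \<epsilon> n\<rfloor>) w)) \<partial>Omc n)
       \<longlonglongrightarrow> (\<integral>w. (\<Prod>i<Suc k. f i (X (t i) w)) \<partial>Om)"
proof (induction k)
  case 0
  fix t :: "nat \<Rightarrow> real" and f :: "nat \<Rightarrow> ('x \<Rightarrow>\<^sub>C real)" and g :: "nat \<Rightarrow> nat \<Rightarrow> 'l \<Rightarrow> real"
  assume t0: "0 \<le> t 0" and gf: "\<And>i. i < Suc 0 \<Longrightarrow> uclose (\<lambda>n. g n i) (\<lambda>n l. f i (\<iota> n l))"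
  have eq: "(\<integral>w. (\<Prod>i<Suc 0. g n i (Y n (nat \<lfloor>t i / \<epsilon> n\<rfloor>) w)) \<partial>Omc n)
      = (\<Sum>l\<in>S n. M n l * (U n ^^ nat \<lfloor>t 0 / \<epsilon> n\<rfloor>) (g n 0) l)" for n
    using chain_base[OF Y_chain finite_S, where h="g n 0" and b="nat \<lfloor>t 0 / \<epsilon> n\<rfloor>"]
    by (simp add: Tapp_stepop)
  have uc: "uclose (\<lambda>n. (U n ^^ nat \<lfloor>t 0 / \<epsilon> n\<rfloor>) (g n 0)) (\<lambda>n l. T (t 0) (f 0) (\<iota> n l))"
    by (rule uclose_U[OF gf[of 0] kk_lim[OF eps_pos eps_lim t0] t0]) simp
  have "(\<lambda>n. \<Sum>l\<in>S n. M n l * (U n ^^ nat \<lfloor>t 0 / \<epsilon> n\<rfloor>) (g n 0) l) \<longlonglongrightarrow> (\<integral>x. T (t 0) (f 0) x \<partial>P)"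
    by (rule WC[OF uc])
  also have "(\<integral>x. T (t 0) (f 0) x \<partial>P) = (\<integral>w. f 0 (X (t 0) w) \<partial>Om)"
    by (rule X_base[OF t0, symmetric])
  finally show "(\<lambda>n. \<integral>w. (\<Prod>i<Suc 0. g n i (Y n (nat \<lfloor>t i / \<epsilon> n\<rfloor>) w)) \<partial>Omc n)
       \<longlonglongrightarrow> (\<integral>w. (\<Prod>i<Suc 0. f i (X (t i) w)) \<partial>Om)"
    unfolding eq by simp
next
  case (Suc k)
  fix t :: "nat \<Rightarrow> real" and f :: "nat \<Rightarrow> ('x \<Rightarrow>\<^sub>C real)" and g :: "nat \<Rightarrow> nat \<Rightarrow> 'l \<Rightarrow> real"
  assume t0: "0 \<le> t 0" and inc: "\<And>i. Suc i < Suc (Suc k) \<Longrightarrow> t i < t (Suc i)"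
    and gf: "\<And>i. i < Suc (Suc k) \<Longrightarrow> uclose (\<lambda>n. g n i) (\<lambda>n l. f i (\<iota> n l))"
  have tm: "i \<le> j \<Longrightarrow> j < Suc (Suc k) \<Longrightarrow> t i \<le> t j" for i j
    by (rule t_mono[where K="Suc (Suc k)" and t=t, OF inc])
  have tnn: "i < Suc (Suc k) \<Longrightarrow> 0 \<le> t i" for i
    using tm[of 0 i] t0 by simp
  define kk where "kk n i = nat \<lfloor>t i / \<epsilon> n\<rfloor>" for n i
  have kkm: "kk n i \<le> kk n j" if "i \<le> j" "j < Suc (Suc k)" for n i j
  proof -
    have "t i / \<epsilon> n \<le> t j / \<epsilon> n" using tm[OF that] eps_pos[of n] by (simp add: divide_right_mono)
    then show ?thesis unfolding kk_def by (intro nat_mono floor_mono)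
  qed
  define dd where "dd n = kk n (Suc k) - kk n k" for n
  define Dt where "Dt = t (Suc k) - t k"
  have Dt0: "Dt \<ge> 0" unfolding Dt_def using tm[of k "Suc k"] by simp
  have ddlim: "(\<lambda>n. real (dd n) * \<epsilon> n) \<longlonglongrightarrow> Dt"
  proof -
    have "real (dd n) * \<epsilon> n = real (kk n (Suc k)) * \<epsilon> n - real (kk n k) * \<epsilon> n" for n
      unfolding dd_def using kkm[of k "Suc k" n] by (simp add: of_nat_diff left_diff_distrib)
    moreover have "(\<lambda>n. real (kk n (Suc k)) * \<epsilon> n - real (kk n k) * \<epsilon> n) \<longlonglongrightarrow> t (Suc k) - t k"
      unfolding kk_def
      by (intro tendsto_diff kk_lim[OF eps_pos eps_lim] tnn) auto
    ultimately show ?thesis unfolding Dt_def by simp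
  qed
  define g' where "g' n i = (if i = k then (\<lambda>l. g n k l * (U n ^^ dd n) (g n (Suc k)) l) else g n i)" for n i
  define f' where "f' i = (if i = k then bmul (f k) (T Dt (f (Suc k))) else f i)" for i
  have inc': "\<And>i. Suc i < Suc k \<Longrightarrow> t i < t (Suc i)" using inc by simp
  have gf': "uclose (\<lambda>n. g' n i) (\<lambda>n l. f' i (\<iota> n l))" if i: "i < Suc k" for i
  proof (cases "i = k")
    case True
    have u2: "uclose (\<lambda>n. (U n ^^ dd n) (g n (Suc k))) (\<lambda>n l. T Dt (f (Suc k)) (\<iota> n l))"
      by (rule uclose_U[OF gf[of "Suc k"] ddlim Dt0]) simp
    have "uclose (\<lambda>n l. g n k l * (U n ^^ dd n) (g n (Suc k)) l)
        (\<lambda>n l. f k (\<iota> n l) * T Dt (f (Suc k)) (\<iota> n l))"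
      by (rule uclose_mult[OF gf[of k] u2]) simp
    then show ?thesis using True unfolding g'_def f'_def by simp
  next
    case False
    then show ?thesis using gf[of i] i unfolding g'_def f'_def by simp
  qed
  have IH: "(\<lambda>n. \<integral>w. (\<Prod>i<Suc k. g' n i (Y n (nat \<lfloor>t i / \<epsilon> n\<rfloor>) w)) \<partial>Omc n)
       \<longlonglongrightarrow> (\<integral>w. (\<Prod>i<Suc k. f' i (X (t i) w)) \<partial>Om)"
    by (rule Suc.IH[OF t0 inc' gf'])
  have chain_eq: "(\<integral>w. (\<Prod>i<Suc (Suc k). g n i (Y n (nat \<lfloor>t i / \<epsilon> n\<rfloor>) w)) \<partial>Omc n)
      = (\<integral>w. (\<Prod>i<Suc k. g' n i (Y n (nat \<lfloor>t i / \<epsilon> n\<rfloor>) w)) \<partial>Omc n)" for n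
  proof -
    define G where "G x = (\<Prod>i<Suc k. g n i (x (kk n i)))" for x :: "nat \<Rightarrow> 'l"
    have dep: "G x = G y" if xy: "\<And>i. i \<le> kk n k \<Longrightarrow> x i = y i" for x y
      unfolding G_def
    proof (rule prod.cong)
      fix i assume "i \<in> {..<Suc k}"
      then have "kk n i \<le> kk n k" using kkm[of i k n] by simp
      then show "g n i (x (kk n i)) = g n i (y (kk n i))" using xy by simp
    qed simp
    have "(\<integral>w. (\<Prod>i<Suc (Suc k). g n i (Y n (nat \<lfloor>t i / \<epsilon> n\<rfloor>) w)) \<partial>Omc n)
        = (\<integral>w. G (\<lambda>j. Y n j w) * g n (Suc k) (Y n (kk n (Suc k)) w) \<partial>Omc n)"
      unfolding G_def kk_def by simp
    also have "\<dots> = (\<integral>w. G (\<lambda>j. Y n j w) * (stepop (S n) (Tmat deg pd M n) ^^ (kk n (Suc k) - kk n k))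
          (g n (Suc k)) (Y n (kk n k) w) \<partial>Omc n)"
      by (rule chain_merge[OF Y_chain finite_S kkm[of k "Suc k" n] dep]) simp_all
    also have "\<dots> = (\<integral>w. (\<Prod>i<Suc k. g' n i (Y n (nat \<lfloor>t i / \<epsilon> n\<rfloor>) w)) \<partial>Omc n)"
    proof -
      have "(\<Prod>i<k. g' n i (Y n (nat \<lfloor>t i / \<epsilon> n\<rfloor>) w)) = (\<Prod>i<k. g n i (Y n (kk n i) w))" for w
        unfolding g'_def kk_def by (intro prod.cong) auto
      then show ?thesis
        unfolding G_def Tapp_stepop[symmetric] dd_def[symmetric]
        by (simp add: g'_def kk_def mult_ac)
    qed
    finally show ?thesis .
  qed
  have X_eq: "(\<integral>w. (\<Prod>i<Suc (Suc k). f i (X (t i) w)) \<partial>Om)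
      = (\<integral>w. (\<Prod>i<Suc k. f' i (X (t i) w)) \<partial>Om)"
  proof -
    define Z where "Z w = (\<Prod>i<Suc k. f i (X (t i) w))" for w
    have tk: "0 \<le> t k" using tnn[of k] by simp
    have Zm: "Z \<in> borel_measurable (nat_filtration Om X (t k))"
      unfolding Z_def
    proof (rule borel_measurable_prod)
      fix i assume "i \<in> {..<Suc k}"
      then have "0 \<le> t i" "t i \<le> t k" using tnn[of i] tm[of i k] by auto
      then show "(\<lambda>w. f i (X (t i) w)) \<in> borel_measurable (nat_filtration Om X (t k))"
        by (intro measurable_compose[OF filt_meas bcf_meas])
    qed
    have Zb: "\<bar>Z w\<bar> \<le> (\<Prod>i<Suc k. norm (f i))" for w
      unfolding Z_def abs_prod
    proof (rule prod_mono)
      fix i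
      show "0 \<le> \<bar>f i (X (t i) w)\<bar> \<and> \<bar>f i (X (t i) w)\<bar> \<le> norm (f i)"
        using norm_bounded[of "f i" "X (t i) w"] by simp
    qed
    have "(\<integral>w. (\<Prod>i<Suc (Suc k). f i (X (t i) w)) \<partial>Om)
        = (\<integral>w. Z w * f (Suc k) (X (t k + Dt) w) \<partial>Om)"
      unfolding Z_def Dt_def by simp
    also have "\<dots> = (\<integral>w. Z w * T Dt (f (Suc k)) (X (t k) w) \<partial>Om)"
      by (rule X_merge[OF tk Dt0 Zm Zb])
    also have "\<dots> = (\<integral>w. (\<Prod>i<Suc k. f' i (X (t i) w)) \<partial>Om)"
    proof -
      have "(\<Prod>i<k. f' i (X (t i) w)) = (\<Prod>i<k. f i (X (t i) w))" for w
        unfolding f'_def by (intro prod.cong) auto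
      then show ?thesis unfolding Z_def by (simp add: f'_def mult_ac)
    qed
    finally show ?thesis .
  qed
  show "(\<lambda>n. \<integral>w. (\<Prod>i<Suc (Suc k). g n i (Y n (nat \<lfloor>t i / \<epsilon> n\<rfloor>) w)) \<partial>Omc n)
       \<longlonglongrightarrow> (\<integral>w. (\<Prod>i<Suc (Suc k). f i (X (t i) w)) \<partial>Om)"
    unfolding chain_eq X_eq by (rule IH)
qed

lemma final:
  fixes k :: nat and t :: "nat \<Rightarrow> real" and f :: "nat \<Rightarrow> ('x \<Rightarrow>\<^sub>C real)"
  assumes "k > 0 \<Longrightarrow> 0 \<le> t 0" and "\<And>i. Suc i < k \<Longrightarrow> t i < t (Suc i)"
  shows "(\<lambda>n. \<integral>w. (\<Prod>i<k. f i (\<iota> n (Y n (nat \<lfloor>t i / \<epsilon> n\<rfloor>) w))) \<partial>Omc n)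
             \<longlonglongrightarrow> (\<integral>w. (\<Prod>i<k. f i (X (t i) w)) \<partial>Om)"
proof (cases k)
  case 0
  have "prob_space (Omc n)" for n using Y_chain[of n] unfolding markov_chain_def by auto
  then have "(\<integral>w. (\<Prod>i<k. f i (\<iota> n (Y n (nat \<lfloor>t i / \<epsilon> n\<rfloor>) w))) \<partial>Omc n) = 1" for n
    using 0 by (simp add: prob_space.prob_space)
  moreover have "(\<integral>w. (\<Prod>i<k. f i (X (t i) w)) \<partial>Om) = 1"
    using 0 Om_prob by (simp add: prob_space.prob_space)
  ultimately show ?thesis by simp
next
  case (Suc k')
  have "(\<lambda>n. \<integral>w. (\<Prod>i<Suc k'. (\<lambda>n i l. f i (\<iota> n l)) n i (Y n (nat \<lfloor>t i / \<epsilon> n\<rfloor>) w)) \<partial>Omc n)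
       \<longlonglongrightarrow> (\<integral>w. (\<Prod>i<Suc k'. f i (X (t i) w)) \<partial>Om)"
    by (rule main_ind) (use assms Suc in \<open>auto intro: uclose_refl\<close>)
  then show ?thesis using Suc by simp
qed

end


theorem proposition1p8:
  fixes deg :: "'l \<Rightarrow> nat"
    and pd :: "'l \<Rightarrow> 'l \<Rightarrow> real"
    and M :: "nat \<Rightarrow> 'l \<Rightarrow> real"
    and \<iota> :: "nat \<Rightarrow> 'l \<Rightarrow> 'x::metric_space"
    and F :: "('x \<Rightarrow>\<^sub>C real) set"
    and Fm :: "nat \<Rightarrow> ('x \<Rightarrow>\<^sub>C real) set"
    and \<epsilon> :: "nat \<Rightarrow> real"
    and A :: "('x \<Rightarrow>\<^sub>C real) \<Rightarrow> ('x \<Rightarrow>\<^sub>C real)"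
    and T :: "real \<Rightarrow> ('x \<Rightarrow>\<^sub>C real) \<Rightarrow> ('x \<Rightarrow>\<^sub>C real)"
    and P :: "'x measure"
    and Om :: "'w measure"
    and X :: "real \<Rightarrow> 'w \<Rightarrow> 'x"
    and Omc :: "nat \<Rightarrow> 'v measure"
    and Y :: "nat \<Rightarrow> nat \<Rightarrow> 'v \<Rightarrow> 'l"
  assumes setting: "coherent_setting deg pd M"
    and inj_iota: "\<And>n. inj_on (\<iota> n) (level deg n)"
    \<comment> \<open>(A1)\<close>
    and A1: "compact (UNIV :: 'x set)"
    \<comment> \<open>(A2)\<close>
    and A2: "\<And>U. open U \<Longrightarrow> U \<noteq> {} \<Longrightarrow>
               eventually (\<lambda>n. \<exists>lam\<in>level deg n. \<iota> n lam \<in> U) sequentially"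
    \<comment> \<open>(A3)\<close>
    and F_subspace: "subspace F"
    and F_dense: "closure F = UNIV"
    and Fm_subspace: "\<And>m. subspace (Fm m)"
    and Fm_findim: "\<And>m. \<exists>B. finite B \<and> span B = Fm m"
    and Fm_mono: "\<And>m. Fm m \<subseteq> Fm (Suc m)"
    and Fm_exhaust: "(\<Union>m. Fm m) = F"
    and A3_inj: "\<And>m. eventually (\<lambda>n. \<forall>f\<in>Fm m. \<forall>g\<in>Fm m.
                    (\<forall>lam\<in>level deg n. f (\<iota> n lam) = g (\<iota> n lam)) \<longrightarrow> f = g) sequentially"
    and A3_inv: "\<And>m. eventually (\<lambda>n. \<forall>f\<in>Fm m. \<exists>g\<in>Fm m.
                    \<forall>lam\<in>level deg n. Tapp deg pd M n (\<lambda>mu. f (\<iota> n mu)) lam = g (\<iota> n lam)) sequentially"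
    \<comment> \<open>(A4)\<close>
    and eps_pos: "\<And>n. \<epsilon> n > 0"
    and eps_lim: "\<epsilon> \<longlonglongrightarrow> 0"
    and A4: "\<And>m f. f \<in> Fm m \<Longrightarrow> \<exists>g :: nat \<Rightarrow> ('x \<Rightarrow>\<^sub>C real).
               eventually (\<lambda>n. g n \<in> Fm m \<and>
                 (\<forall>lam\<in>level deg n. g n (\<iota> n lam)
                    = (Tapp deg pd M n (\<lambda>mu. f (\<iota> n mu)) lam - f (\<iota> n lam)) / \<epsilon> n)) sequentially
               \<and> g \<longlonglongrightarrow> A f"
    \<comment> \<open>(A5)\<close>
    and A5: "const_bcontfun 1 \<in> F"
    \<comment> \<open>the closure of A generates the conservative Markov semigroup T\<close>
    and T_markov: "markov_semigroup T"
    and T_gen: "generator_graph T = closure {(f, A f) | f. f \<in> F}"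
    \<comment> \<open>iota_n(M_n) converges weakly to the probability measure P\<close>
    and P_prob: "prob_space P"
    and P_borel: "sets P = sets borel"
    and weak_conv: "\<And>f :: 'x \<Rightarrow>\<^sub>C real.
        (\<lambda>n. \<Sum>lam\<in>level deg n. M n lam * f (\<iota> n lam)) \<longlonglongrightarrow> (\<integral>x. f x \<partial>P)"
    \<comment> \<open>X: Markov process with semigroup T and initial distribution P\<close>
    and X_markov: "markov_process Om X T P"
    \<comment> \<open>lambda_n: stationary Markov chain on L_n, transition matrix T_n, initial law M_n\<close>
    and Y_chain: "\<And>n. markov_chain (Omc n) (Y n) (level deg n) (M n) (Tmat deg pd M n)"
  shows "\<And>(k::nat) (t::nat \<Rightarrow> real) (f::nat \<Rightarrow> ('x \<Rightarrow>\<^sub>C real)).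
           (k > 0 \<Longrightarrow> 0 \<le> t 0) \<Longrightarrow> (\<And>i. Suc i < k \<Longrightarrow> t i < t (Suc i)) \<Longrightarrow>
           (\<lambda>n. \<integral>w. (\<Prod>i<k. f i (\<iota> n (Y n (nat \<lfloor>t i / \<epsilon> n\<rfloor>) w))) \<partial>Omc n)
             \<longlonglongrightarrow> (\<integral>w. (\<Prod>i<k. f i (X (t i) w)) \<partial>Om)"
  proof -
  interpret mainl deg pd M \<iota> F Fm \<epsilon> A T P Om X Omc Y
    by (intro mainl.intro tkl.intro mainl_axioms.intro; fact assms)
  fix k :: nat and t :: "nat \<Rightarrow> real" and f :: "nat \<Rightarrow> ('x \<Rightarrow>\<^sub>C real)"
  assume "k > 0 \<Longrightarrow> 0 \<le> t 0" and "\<And>i. Suc i < k \<Longrightarrow> t i < t (Suc i)"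
  then show "(\<lambda>n. \<integral>w. (\<Prod>i<k. f i (\<iota> n (Y n (nat \<lfloor>t i / \<epsilon> n\<rfloor>) w))) \<partial>Omc n)
             \<longlonglongrightarrow> (\<integral>w. (\<Prod>i<k. f i (X (t i) w)) \<partial>Om)"
    by (rule final)
qed

end
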